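(* For $\Lambda=A\mathds Z^d$ and $\bm \nu\in \mathds C^n$ with $\mathrm{Re}(\nu_i)>d$, $1\le i\le n$, we have \[ \zeta_\Lambda^{(n)}(\bm \nu) = 2^d\sum_{\bm p\in \{\pm 1\}^{d - 1} }\sum_{j=0}^{d-1} \int_{0}^{1/2} \int_{[0,1/2]^{d-1}} u^{d-1} f(u \bm w )\,\mathrm d \bm v\,\mathrm d u, \] with $\bm w =A^{-T}\big(\sigma^j (2 p_1 v_1 ,\dots, 2 p_{d-1} v_{d-1} , 1)^T\big)$, the cyclic permutation $\sigma (x_1,\dots, x_d)^T = (x_d,x_1,\dots ,x_{d-1})^T$, and $f(\bm k) = \prod_{i=1}^n Z_{\Lambda,\nu_i}(\bm k)$.
   Context: $A\in\mathds R^{d\times d}$ is regular. The Epstein zeta function is $Z_{\Lambda,\nu}(\bm k)={\sum_{\bm z\in\Lambda}}' e^{-2\pi i\bm z\cdot\bm k}|\bm z|^{-\nu}$ for $\mathrm{Re}(\nu)>d$, where the primed sum excludes $\bm z=\bm 0$. The $n$-body zeta function is $\zeta_\Lambda^{(n)}(\bm \nu) = {\sum_{\bm x^{(1)},\dots, \bm x^{(n-1)} \in \Lambda}}' \prod_{j=1}^{n} |\bm x^{(j)}-\bm x^{(j-1)}|^{-\nu_j}$ with $\bm x^{(0)}=\bm x^{(n)}=\bm 0$ (primed sum excludes vanishing distances); for $\mathrm{Re}(\nu_i)>d$ it equals $|\det A|\int_{A^{-T}(-1/2,1/2)^d}\prod_{i=1}^n Z_{\Lambda,\nu_i}(\bm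 k)\,\mathrm d\bm k$. *)

theory Defs
  imports "HOL-Analysis.Analysis"
begin

(* Vectors in R^d are represented as functions nat => real, only the
   coordinates 0..d-1 being relevant (lattice points are 0 outside).
   A d x d real matrix is a function nat => nat => real (entries i,j < d). *)

definition mat_det :: "nat \<Rightarrow> (nat \<Rightarrow> nat \<Rightarrow> real) \<Rightarrow> real" where
  "mat_det d A = (\<Sum>p\<in>{p. p permutes {..<d}}. of_int (sign p) * (\<Prod>i<d. A i (p i)))"

definition mat_vec :: "nat \<Rightarrow> (nat \<Rightarrow> nat \<Rightarrow> real) \<Rightarrow> (nat \<Rightarrow> real) \<Rightarrow> (nat \<Rightarrow> real)" where
  "mat_vec d A x = (\<lambda>i. if i < d then (\<Sum>j<d. A i j * x j) else 0)"

definition lattice :: "nat \<Rightarrow> (nat \<Rightarrow> nat \<Rightarrow> real) \<Rightarrow> (nat \<Rightarrow> real) set" where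
  "lattice d A = {mat_vec d A (\<lambda>j. of_int (z j)) | z :: nat \<Rightarrow> int. True}"

definition vdot :: "nat \<Rightarrow> (nat \<Rightarrow> real) \<Rightarrow> (nat \<Rightarrow> real) \<Rightarrow> real" where
  "vdot d x y = (\<Sum>i<d. x i * y i)"

definition vnorm :: "nat \<Rightarrow> (nat \<Rightarrow> real) \<Rightarrow> real" where
  "vnorm d x = sqrt (\<Sum>i<d. (x i)^2)"

definition inv_transpose_apply :: "nat \<Rightarrow> (nat \<Rightarrow> nat \<Rightarrow> real) \<Rightarrow> (nat \<Rightarrow> real) \<Rightarrow> (nat \<Rightarrow> real)" where
  "inv_transpose_apply d A y =
     (THE w. (\<forall>i\<ge>d. w i = 0) \<and> (\<forall>i<d. (\<Sum>j<d. A j i * w j) = y i))"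

definition epstein_zeta :: "nat \<Rightarrow> (nat \<Rightarrow> nat \<Rightarrow> real) \<Rightarrow> complex \<Rightarrow> (nat \<Rightarrow> real) \<Rightarrow> complex" where
  "epstein_zeta d A \<nu> k =
     (\<Sum>\<^sub>\<infinity>z\<in>lattice d A - {(\<lambda>_. 0)}.
        exp (- 2 * of_real pi * \<i> * of_real (vdot d z k)) * (of_real (vnorm d z)) powr (- \<nu>))"

definition nbody_point :: "nat \<Rightarrow> (nat \<Rightarrow> nat \<Rightarrow> real) \<Rightarrow> nat \<Rightarrow> (nat \<Rightarrow> real)" where
  "nbody_point n x j = (if 1 \<le> j \<and> j < n then x j else (\<lambda>_. 0))"

definition nbody_zeta :: "nat \<Rightarrow> (nat \<Rightarrow> nat \<Rightarrow> real) \<Rightarrow> nat \<Rightarrow> (nat \<Rightarrow> complex) \<Rightarrow> complex" where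
  "nbody_zeta d A n \<nu> =
     (\<Sum>\<^sub>\<infinity>x\<in>{x \<in> PiE {1..<n} (\<lambda>_. lattice d A).
            \<forall>j\<in>{1..n}. nbody_point n x j \<noteq> nbody_point n x (j - 1)}.
        (\<Prod>j=1..n. (of_real (vnorm d (\<lambda>i. nbody_point n x j i - nbody_point n x (j - 1) i))) powr (- \<nu> j)))"

text \<open>Cyclic permutation sigma(x_1,...,x_d) = (x_d,x_1,...,x_{d-1}) (0-indexed here).\<close>
definition cyc_perm :: "nat \<Rightarrow> (nat \<Rightarrow> real) \<Rightarrow> (nat \<Rightarrow> real)" where
  "cyc_perm d x = (\<lambda>i. if i = 0 then x (d - 1) else if i < d then x (i - 1) else 0)"

definition pyr_vec :: "nat \<Rightarrow> (nat \<Rightarrow> real) \<Rightarrow> (nat \<Rightarrow> real) \<Rightarrow> (nat \<Rightarrow> real)" where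
  "pyr_vec d p v = (\<lambda>i. if i < d - 1 then 2 * p i * v i else if i = d - 1 then 1 else 0)"

end

theory Submission
  imports Defs "Jordan_Normal_Form.Gauss_Jordan_Elimination" "Jordan_Normal_Form.Determinant"
begin


lemma mat_det_jnf: "det (mat d d (\<lambda>(i,j). A i j)) = mat_det d A"
proof -
  have "det (mat d d (\<lambda>(i,j). A i j)) = (\<Sum>p\<in>{p. p permutes {0..<d}}. signof p * (\<Prod>i=0..<d. (mat d d (\<lambda>(i,j). A i j)) $$ (i, p i)))"
    by (rule det_def') simp
  also have "\<dots> = mat_det d A"
    unfolding mat_det_def atLeast0LessThan
  proof (rule sum.cong)
    fix p assume "p \<in> {p. p permutes {..<d}}"
    then have "p permutes {..<d}" by simp
    then have "\<And>i. i < d \<Longrightarrow> p i < d" using permutes_in_image by fastforce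
    then show "signof p * (\<Prod>i<d. (mat d d (\<lambda>(i,j). A i j)) $$ (i, p i)) = of_int (sign p) * (\<Prod>i<d. A i (p i))"
      by (auto intro!: prod.cong)
  qed simp
  finally show ?thesis .
qed

lemma inverse_exists:
  assumes "mat_det d A \<noteq> 0"
  obtains B where "\<And>i j. i<d \<Longrightarrow> j<d \<Longrightarrow> (\<Sum>k<d. B i k * A k j) = (if i=j then 1 else 0)"
    and "\<And>i j. i<d \<Longrightarrow> j<d \<Longrightarrow> (\<Sum>k<d. A i k * B k j) = (if i=j then 1 else 0)"
proof -
  let ?M = "mat d d (\<lambda>(i,j). A i j)"
  have car: "?M \<in> carrier_mat d d" by simp
  have "det ?M \<noteq> 0" using assms mat_det_jnf by metis
  from det_non_zero_imp_unit[OF car this] have U: "?M \<in> Units (ring_mat TYPE(real) d d)" .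
  obtain Bm where S: "mat_inverse ?M = Some Bm"
    using mat_inverse(1)[OF car, of d] U by (cases "mat_inverse ?M") auto
  from mat_inverse(2)[OF car S] have 1: "?M * Bm = 1\<^sub>m d" and 2: "Bm * ?M = 1\<^sub>m d"
    and Bc: "Bm \<in> carrier_mat d d" by auto
  define B where "B i j = Bm $$ (i,j)" for i j
  show ?thesis
  proof
    fix i j assume ij: "i < d" "j < d"
    have "(Bm * ?M) $$ (i,j) = (if i = j then 1 else 0)" using 2 ij by simp
    moreover have "(Bm * ?M) $$ (i,j) = (\<Sum>k<d. B i k * A k j)"
      using ij Bc by (simp add: B_def scalar_prod_def atLeast0LessThan)
    ultimately show "(\<Sum>k<d. B i k * A k j) = (if i=j then 1 else 0)" by simp
  next
    fix i j assume ij: "i < d" "j < d"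
    have "(?M * Bm) $$ (i,j) = (if i = j then 1 else 0)" using 1 ij by simp
    moreover have "(?M * Bm) $$ (i,j) = (\<Sum>k<d. A i k * B k j)"
      using ij Bc by (simp add: B_def scalar_prod_def atLeast0LessThan)
    ultimately show "(\<Sum>k<d. A i k * B k j) = (if i=j then 1 else 0)" by simp
  qed
qed


locale lat =
  fixes d :: nat and A B :: "nat \<Rightarrow> nat \<Rightarrow> real"
  assumes d1: "d \<ge> 1"
    and BA: "\<And>i j. i<d \<Longrightarrow> j<d \<Longrightarrow> (\<Sum>k<d. B i k * A k j) = (if i=j then 1 else 0)"
    and AB: "\<And>i j. i<d \<Longrightarrow> j<d \<Longrightarrow> (\<Sum>k<d. A i k * B k j) = (if i=j then 1 else 0)"
begin

definition coeffs :: "(nat \<Rightarrow> real) \<Rightarrow> nat \<Rightarrow> real" where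
  "coeffs z k = (\<Sum>i<d. B k i * z i)"

lemma sum_delta_left: "i < d \<Longrightarrow> (\<Sum>k<d. (if k = i then 1 else 0) * f k) = (f i :: real)"
proof -
  assume i: "i < d"
  have "(\<Sum>k<d. (if k = i then 1 else 0) * f k) = (\<Sum>k<d. if k = i then f k else 0)"
    by (intro sum.cong) auto
  then show ?thesis using i by simp
qed

lemma sum_delta_left': "i < d \<Longrightarrow> (\<Sum>k<d. (if i = k then 1 else 0) * f k) = (f i :: real)"
  using sum_delta_left[of i f] by (simp add: eq_commute)

lemma ita: "inv_transpose_apply d A y = (\<lambda>i. if i<d then \<Sum>j<d. B j i * y j else 0)"
proof -
  let ?w = "(\<lambda>i. if i<d then \<Sum>j<d. B j i * y j else 0)"
  let ?P = "\<lambda>w. (\<forall>i\<ge>d. w i = 0) \<and> (\<forall>i<d. (\<Sum>j<d. A j i * w j) = y i)"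
  have P: "?P ?w"
  proof (intro conjI allI impI)
    fix i assume i: "i < d"
    have "(\<Sum>j<d. A j i * ?w j) = (\<Sum>j<d. \<Sum>k<d. B k j * A j i * y k)"
      by (simp add: sum_distrib_left mult_ac)
    also have "\<dots> = (\<Sum>k<d. \<Sum>j<d. B k j * A j i * y k)"
      by (rule sum.swap)
    also have "\<dots> = (\<Sum>k<d. (\<Sum>j<d. B k j * A j i) * y k)"
      by (simp add: sum_distrib_right)
    also have "\<dots> = (\<Sum>k<d. (if k = i then 1 else 0) * y k)"
      using i by (intro sum.cong) (auto simp: BA)
    also have "\<dots> = y i" using i by (rule sum_delta_left)
    finally show "(\<Sum>j<d. A j i * ?w j) = y i" .
  qed simp
  have U: "w = ?w" if "?P w" for w
  proof
    fix i show "w i = ?w i"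
    proof (cases "i < d")
      case True
      have "?w i = (\<Sum>j<d. B j i * (\<Sum>m<d. A m j * w m))" using True that by simp
      also have "\<dots> = (\<Sum>m<d. (\<Sum>j<d. A m j * B j i) * w m)"
        by (simp add: sum_distrib_left sum_distrib_right mult_ac) (rule sum.swap)
      also have "\<dots> = (\<Sum>m<d. (if m = i then 1 else 0) * w m)"
        using True by (intro sum.cong) (auto simp: AB)
      also have "\<dots> = w i" using True by (rule sum_delta_left)
      finally show ?thesis by simp
    qed (use that in simp)
  qed
  show ?thesis unfolding inv_transpose_apply_def
    using P U by (intro the_equality) blast+
qed

lemma vdot_ita: "vdot d z (\<lambda>l. u * inv_transpose_apply d A y l) = u * (\<Sum>k<d. coeffs z k * y k)"
proof -
  have "vdot d z (\<lambda>l. u * inv_transpose_apply d A y l) = (\<Sum>i<d. \<Sum>k<d. u * (B k i * z i * y k))"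
    unfolding vdot_def ita by (simp add: sum_distrib_left mult_ac)
  also have "\<dots> = u * (\<Sum>k<d. coeffs z k * y k)"
    unfolding coeffs_def by (subst sum.swap) (simp add: sum_distrib_left sum_distrib_right mult_ac)
  finally show ?thesis .
qed

lemma coeffs_mat_vec: "k < d \<Longrightarrow> coeffs (mat_vec d A x) k = x k"
proof -
  assume k: "k < d"
  have "coeffs (mat_vec d A x) k = (\<Sum>i<d. \<Sum>j<d. B k i * A i j * x j)"
    unfolding coeffs_def mat_vec_def by (simp add: sum_distrib_left mult_ac)
  also have "\<dots> = (\<Sum>j<d. (\<Sum>i<d. B k i * A i j) * x j)"
    by (subst sum.swap) (simp add: sum_distrib_right)
  also have "\<dots> = (\<Sum>j<d. (if k = j then 1 else 0) * x j)"
    using k by (intro sum.cong) (auto simp: BA)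
  also have "\<dots> = x k" using k by (rule sum_delta_left')
  finally show ?thesis .
qed

lemma mat_vec_cong: "(\<And>j. j < d \<Longrightarrow> x j = y j) \<Longrightarrow> mat_vec d A x = mat_vec d A y"
  unfolding mat_vec_def by (auto intro!: sum.cong)

lemma lattice_iff: "z \<in> Defs.lattice d A \<longleftrightarrow> (\<exists>m::nat\<Rightarrow>int. z = mat_vec d A (\<lambda>j. of_int (m j)))"
  unfolding Defs.lattice_def by auto

lemma lattice_zero: "(\<lambda>_. 0) \<in> Defs.lattice d A"
  unfolding lattice_iff by (rule exI[of _ "\<lambda>_. 0"]) (simp add: mat_vec_def fun_eq_iff)

lemma lattice_add: "z \<in> Defs.lattice d A \<Longrightarrow> w \<in> Defs.lattice d A \<Longrightarrow> (\<lambda>i. z i + w i) \<in> Defs.lattice d A"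
  unfolding lattice_iff
  apply clarify
  subgoal for m m' by (rule exI[of _ "\<lambda>j. m j + m' j"]) (auto simp: mat_vec_def sum.distrib algebra_simps)
  done

lemma lattice_neg: "z \<in> Defs.lattice d A \<Longrightarrow> (\<lambda>i. - z i) \<in> Defs.lattice d A"
  unfolding lattice_iff
  apply clarify
  subgoal for m by (rule exI[of _ "\<lambda>j. - m j"]) (auto simp: mat_vec_def sum_negf)
  done

lemma lattice_diff: "z \<in> Defs.lattice d A \<Longrightarrow> w \<in> Defs.lattice d A \<Longrightarrow> (\<lambda>i. z i - w i) \<in> Defs.lattice d A"
  using lattice_add[OF _ lattice_neg, of z w] by simp

lemma lattice_sum: "(\<And>j. j \<in> J \<Longrightarrow> t j \<in> Defs.lattice d A) \<Longrightarrow> (\<lambda>i. \<Sum>j\<in>J. t j i) \<in> Defs.lattice d A"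
proof (induction J rule: infinite_finite_induct)
  case (infinite A)
  then show ?case using lattice_zero by simp
next
  case empty
  then show ?case using lattice_zero by simp
next
  case (insert x F)
  then show ?case using lattice_add[of "t x" "\<lambda>i. \<Sum>j\<in>F. t j i"] by simp
qed

lemma lattice_outside: "z \<in> Defs.lattice d A \<Longrightarrow> i \<ge> d \<Longrightarrow> z i = 0"
  unfolding lattice_iff mat_vec_def by auto

lemma lattice_coeffs_int: "z \<in> Defs.lattice d A \<Longrightarrow> k < d \<Longrightarrow> coeffs z k \<in> \<int>"
  unfolding lattice_iff by (auto simp: coeffs_mat_vec)

lemma lattice_eq_zero_iff: "z \<in> Defs.lattice d A \<Longrightarrow> z = (\<lambda>_. 0) \<longleftrightarrow> (\<forall>k<d. coeffs z k = 0)"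
proof -
  assume "z \<in> Defs.lattice d A"
  then obtain m :: "nat \<Rightarrow> int" where z: "z = mat_vec d A (\<lambda>j. of_int (m j))"
    unfolding lattice_iff by blast
  show ?thesis
  proof
    assume "z = (\<lambda>_. 0)" then show "\<forall>k<d. coeffs z k = 0" by (simp add: coeffs_def)
  next
    assume "\<forall>k<d. coeffs z k = 0"
    then have "\<forall>k<d. real_of_int (m k) = 0" using z coeffs_mat_vec by auto
    then have "z = mat_vec d A (\<lambda>_. 0)" using z by (auto intro: mat_vec_cong)
    then show "z = (\<lambda>_. 0)" by (simp add: mat_vec_def fun_eq_iff)
  qed
qed

lemma coeffs_sum: "coeffs (\<lambda>i. \<Sum>j\<in>J. t j i) k = (\<Sum>j\<in>J. coeffs (t j) k)"
  unfolding coeffs_def by (simp add: sum_distrib_left sum.swap[of _ J])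

lemma coeffs_neg: "coeffs (\<lambda>i. - z i) k = - coeffs z k"
  unfolding coeffs_def by (simp add: sum_negf)

end


lemma int_powr_summable:
  assumes r: "r > 1"
  shows "(\<lambda>k::int. (1 + real_of_int \<bar>k\<bar>) powr (-r)) summable_on UNIV"
proof -
  have "summable (\<lambda>n. real n powr (-r))" using r by (subst summable_real_powr_iff) simp
  then have "summable (\<lambda>n. real (Suc n) powr (-r))" by (subst summable_Suc_iff)
  then have "summable (\<lambda>n. (1 + real n) powr (-r))" by simp
  then have nat: "(\<lambda>n. (1 + real n) powr (-r)) summable_on UNIV"
    by (rule summable_nonneg_imp_summable_on) simp
  let ?f = "\<lambda>k::int. (1 + real_of_int \<bar>k\<bar>) powr (-r)"
  have 1: "?f summable_on range int"
    by (subst summable_on_reindex) (use nat in \<open>auto simp: o_def inj_on_def\<close>)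
  have 2: "?f summable_on range (\<lambda>n. - int n)"
    by (subst summable_on_reindex) (use nat in \<open>auto simp: o_def inj_on_def\<close>)
  have U: "(UNIV :: int set) = range int \<union> range (\<lambda>n. - int n)"
  proof -
    have "k \<in> range int \<union> range (\<lambda>n. - int n)" for k :: int
    proof (cases "k \<ge> 0")
      case True then have "k = int (nat k)" by simp
      then show ?thesis by blast
    next
      case False then have "k = - int (nat (-k))" by simp
      then show ?thesis by blast
    qed
    then show ?thesis by blast
  qed
  show ?thesis by (subst U) (rule summable_on_union[OF 1 2])
qed

lemma summable_on_prod_PiE_norm:
  fixes f :: "'a \<Rightarrow> 'b \<Rightarrow> 'c :: {real_normed_field,banach,second_countable_topology}"
  assumes "finite I" "\<And>i. i \<in> I \<Longrightarrow> countable (S i)"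
    and "\<And>i. i \<in> I \<Longrightarrow> (\<lambda>x. norm (f i x)) summable_on S i"
  shows "(\<lambda>g. norm (\<Prod>i\<in>I. f i (g i))) summable_on PiE I S"
proof -
  have "Infinite_Set_Sum.abs_summable_on (f i) (S i)" if "i \<in> I" for i
    using abs_summable_equivalent[of "f i" "S i"] assms(3)[OF that] by simp
  then have "Infinite_Set_Sum.abs_summable_on (\<lambda>g. \<Prod>i\<in>I. f i (g i)) (PiE I S)"
    by (intro abs_summable_on_prod_PiE assms)
  then have "Infinite_Sum.abs_summable_on (\<lambda>g. \<Prod>i\<in>I. f i (g i)) (PiE I S)"
    using abs_summable_equivalent[of "\<lambda>g. \<Prod>i\<in>I. f i (g i)" "PiE I S"] by blast
  then show ?thesis by simp
qed

context lat
begin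

lemma comp_le_vnorm: "i < d \<Longrightarrow> \<bar>z i\<bar> \<le> vnorm d z"
proof -
  assume i: "i < d"
  have "(z i)^2 \<le> (\<Sum>j<d. (z j)^2)" using i by (intro member_le_sum) auto
  then have "sqrt ((z i)^2) \<le> vnorm d z" unfolding vnorm_def by (rule real_sqrt_le_mono)
  then show ?thesis by simp
qed

definition K :: real where "K = 1 + (\<Sum>j<d. \<Sum>i<d. \<bar>B j i\<bar>)"

lemma K_pos: "K \<ge> 1"
  unfolding K_def by (simp add: sum_nonneg)

lemma coeffs_bound: "j < d \<Longrightarrow> \<bar>coeffs z j\<bar> \<le> K * vnorm d z"
proof -
  assume j: "j < d"
  have "\<bar>coeffs z j\<bar> \<le> (\<Sum>i<d. \<bar>B j i\<bar> * \<bar>z i\<bar>)"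
    unfolding coeffs_def by (rule order_trans[OF sum_abs]) (simp add: abs_mult)
  also have "\<dots> \<le> (\<Sum>i<d. \<bar>B j i\<bar> * vnorm d z)"
    by (intro sum_mono mult_left_mono comp_le_vnorm) auto
  also have "\<dots> = (\<Sum>i<d. \<bar>B j i\<bar>) * vnorm d z" by (simp add: sum_distrib_right)
  also have "\<dots> \<le> K * vnorm d z"
  proof (rule mult_right_mono)
    have "(\<Sum>i<d. \<bar>B j i\<bar>) \<le> (\<Sum>j<d. \<Sum>i<d. \<bar>B j i\<bar>)"
      using j by (intro member_le_sum[of j "{..<d}" "\<lambda>j. \<Sum>i<d. \<bar>B j i\<bar>"]) (auto intro: sum_nonneg)
    then show "(\<Sum>i<d. \<bar>B j i\<bar>) \<le> K" unfolding K_def by simp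
  qed (simp add: vnorm_def sum_nonneg)
  finally show ?thesis .
qed

lemma vnorm_nonneg: "vnorm d z \<ge> 0"
  unfolding vnorm_def by (simp add: sum_nonneg)

lemma lattice_repr:
  assumes "z \<in> Defs.lattice d A"
  obtains M where "M \<in> PiE {..<d} (\<lambda>_. UNIV::int set)" "z = mat_vec d A (\<lambda>j. real_of_int (M j))"
proof -
  obtain m :: "nat \<Rightarrow> int" where z: "z = mat_vec d A (\<lambda>j. of_int (m j))"
    using assms unfolding lattice_iff by blast
  let ?M = "restrict m {..<d}"
  have "z = mat_vec d A (\<lambda>j. real_of_int (?M j))" unfolding z by (rule mat_vec_cong) simp
  moreover have "?M \<in> PiE {..<d} (\<lambda>_. UNIV)" by simp
  ultimately show ?thesis using that by blast
qed

lemma epstein_abs_summable: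
  assumes s: "s > real d"
  shows "(\<lambda>z. vnorm d z powr (-s)) summable_on (Defs.lattice d A - {\<lambda>_. 0})"
proof -
  define h where "h M = mat_vec d A (\<lambda>j. real_of_int (M j))" for M :: "nat \<Rightarrow> int"
  define P where "P = PiE {..<d} (\<lambda>_. UNIV::int set) - {M. \<forall>j<d. M j = 0}"
  have hc: "coeffs (h M) j = M j" if "j < d" for M j using that by (simp add: h_def coeffs_mat_vec)
  have img: "Defs.lattice d A - {\<lambda>_. 0} = h ` P"
  proof
    show "Defs.lattice d A - {\<lambda>_. 0} \<subseteq> h ` P"
    proof
      fix z assume z: "z \<in> Defs.lattice d A - {\<lambda>_. 0}"
      then obtain M where M: "M \<in> PiE {..<d} (\<lambda>_. UNIV::int set)" "z = h M"
        using lattice_repr unfolding h_def by blast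
      have "\<not> (\<forall>j<d. M j = 0)"
      proof
        assume "\<forall>j<d. M j = 0"
        then have "\<forall>k<d. coeffs z k = 0" using M hc by simp
        then show False using z lattice_eq_zero_iff by blast
      qed
      then show "z \<in> h ` P" using M unfolding P_def by blast
    qed
  next
    show "h ` P \<subseteq> Defs.lattice d A - {\<lambda>_. 0}"
    proof
      fix z assume "z \<in> h ` P"
      then obtain M where M: "M \<in> P" "z = h M" by blast
      have L: "z \<in> Defs.lattice d A" unfolding M h_def lattice_iff by blast
      from M obtain j where "j < d" "M j \<noteq> 0" unfolding P_def by blast
      then have "coeffs z j \<noteq> 0" using M hc by simp
      then have "z \<noteq> (\<lambda>_. 0)" using lattice_eq_zero_iff[OF L] \<open>j < d\<close> by blast
      then show "z \<in> Defs.lattice d A - {\<lambda>_. 0}" using L by blast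
    qed
  qed
  have inj: "inj_on h P"
  proof
    fix M M' assume MM: "M \<in> P" "M' \<in> P" "h M = h M'"
    then have "\<And>j. j \<in> {..<d} \<Longrightarrow> M j = M' j" using hc by (metis lessThan_iff of_int_eq_iff)
    then show "M = M'" using MM unfolding P_def by (intro PiE_ext[of M "{..<d}" "\<lambda>_. UNIV"]) auto
  qed
  have dpos: "real d > 0" using d1 by simp
  define r where "r = s / real d"
  have r: "r > 1" using s dpos unfolding r_def by (simp add: field_simps)
  define g where "g M = (\<Prod>j<d. (1 + real_of_int \<bar>M j\<bar>) powr (-r))" for M :: "nat \<Rightarrow> int"
  define C where "C = ((2 * K) powr r) ^ d"
  have gs: "g summable_on PiE {..<d} (\<lambda>_. UNIV::int set)"
  proof -
    have "(\<lambda>M. norm (\<Prod>j<d. (1 + real_of_int \<bar>M j\<bar>) powr (-r))) summable_on PiE {..<d} (\<lambda>_. UNIV::int set)"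
      by (rule summable_on_prod_PiE_norm) (use int_powr_summable[OF r] in auto)
    moreover have "norm (\<Prod>j<d. (1 + real_of_int \<bar>M j\<bar>) powr (-r)) = g M" for M
      unfolding g_def by (simp add: prod_nonneg)
    ultimately show ?thesis by simp
  qed
  then have gs': "(\<lambda>M. C * g M) summable_on P"
    by (intro summable_on_cmult_right summable_on_subset[OF gs]) (auto simp: P_def)
  have bound: "vnorm d (h M) powr (-s) \<le> C * g M" if M: "M \<in> P" for M
  proof -
    let ?v = "vnorm d (h M)"
    from M obtain j0 where j0: "j0 < d" "M j0 \<noteq> 0" unfolding P_def by blast
    have "1 \<le> \<bar>real_of_int (M j0)\<bar>" using j0 by linarith
    also have "\<dots> \<le> K * ?v" using coeffs_bound[OF j0(1), of "h M"] hc[OF j0(1)] by simp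
    finally have v1: "1 \<le> K * ?v" .
    have vpos: "?v > 0" using v1 K_pos vnorm_nonneg[of "h M"]
      by (metis less_eq_real_def mult_zero_right not_one_le_zero)
    have Kpos: "K > 0" using K_pos by simp
    have each: "(1 + real_of_int \<bar>M j\<bar>) / (2 * K) \<le> ?v" if j: "j < d" for j
    proof -
      have "\<bar>real_of_int (M j)\<bar> \<le> K * ?v" using coeffs_bound[OF j, of "h M"] hc[OF j] by simp
      then have "1 + real_of_int \<bar>M j\<bar> \<le> 2 * K * ?v" using v1 by simp
      then show ?thesis using Kpos by (simp add: field_simps)
    qed
    have "?v powr (-s) = ?v powr (\<Sum>j<d. - r)" using dpos unfolding r_def by simp
    also have "\<dots> = (\<Prod>j<d. ?v powr (-r))" using vpos by (intro powr_sum) simp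
    also have "\<dots> \<le> (\<Prod>j<d. ((1 + real_of_int \<bar>M j\<bar>) / (2 * K)) powr (-r))"
      using r Kpos by (intro prod_mono conjI powr_mono2' each) (auto simp: add_pos_nonneg)
    also have "\<dots> = (\<Prod>j<d. (2 * K) powr r * (1 + real_of_int \<bar>M j\<bar>) powr (-r))"
      using Kpos by (intro prod.cong refl) (simp add: powr_divide powr_minus divide_simps add_pos_nonneg)
    also have "\<dots> = C * g M" unfolding C_def g_def by (simp add: prod.distrib)
    finally show ?thesis .
  qed
  have "(\<lambda>M. vnorm d (h M) powr (-s)) summable_on P"
    by (rule summable_on_comparison_test[OF gs']) (use bound in auto)
  then have "(\<lambda>z. vnorm d z powr (-s)) summable_on h ` P"
    by (subst summable_on_reindex[OF inj]) (simp add: o_def)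
  then show ?thesis using img by simp
qed

end


lemma infsum_as_suminf:
  fixes \<phi> :: "'t \<Rightarrow> 'b::banach"
  assumes e: "bij_betw e UNIV T" and s: "summable (\<lambda>n. norm (\<phi> (e n)))"
  shows "(\<Sum>\<^sub>\<infinity>t\<in>T. \<phi> t) = (\<Sum>n. \<phi> (e n))"
proof -
  have "summable (\<lambda>n. \<phi> (e n))" using s by (rule summable_norm_cancel)
  then have "(\<lambda>n. \<phi> (e n)) sums (\<Sum>n. \<phi> (e n))" by (rule summable_sums)
  then have "((\<lambda>n. \<phi> (e n)) has_sum (\<Sum>n. \<phi> (e n))) UNIV"
    using s by (intro norm_summable_imp_has_sum)
  then have "infsum (\<lambda>n. \<phi> (e n)) UNIV = (\<Sum>n. \<phi> (e n))" by (rule infsumI)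
  then show ?thesis using infsum_reindex_bij_betw[OF e, of \<phi>] by simp
qed

lemma integral_infsum_exchange:
  fixes a :: "'t \<Rightarrow> complex" and g :: "'t \<Rightarrow> 'a \<Rightarrow> complex"
  assumes T: "countable T" and a: "(\<lambda>t. norm (a t)) summable_on T"
    and gi: "\<And>t. t \<in> T \<Longrightarrow> integrable M (g t)"
    and gb: "\<And>t x. t \<in> T \<Longrightarrow> x \<in> space M \<Longrightarrow> norm (g t x) \<le> D"
    and gn: "\<And>t. t \<in> T \<Longrightarrow> (\<integral>x. norm (g t x) \<partial>M) \<le> C"
    and F: "\<And>x. x \<in> space M \<Longrightarrow> F x = (\<Sum>\<^sub>\<infinity>t\<in>T. a t * g t x)"
  shows "integrable M F \<and> integral\<^sup>L M F = (\<Sum>\<^sub>\<infinity>t\<in>T. a t * integral\<^sup>L M (g t))"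
proof (cases "finite T")
  case True
  have F': "F x = (\<Sum>t\<in>T. a t * g t x)" if "x \<in> space M" for x using F[OF that] True by simp
  have "integrable M (\<lambda>x. \<Sum>t\<in>T. a t * g t x)" using gi by (intro Bochner_Integration.integrable_sum integrable_mult_right) auto
  then have I: "integrable M F" using F' by (subst Bochner_Integration.integrable_cong[OF refl F']) auto
  have "integral\<^sup>L M F = integral\<^sup>L M (\<lambda>x. \<Sum>t\<in>T. a t * g t x)" using F' by (intro Bochner_Integration.integral_cong) auto
  also have "\<dots> = (\<Sum>t\<in>T. a t * integral\<^sup>L M (g t))" using gi by (subst Bochner_Integration.integral_sum) (auto intro: integrable_mult_right)
  finally show ?thesis using I True by simp
next
  case False
  define e where "e = from_nat_into T"
  have e: "bij_betw e UNIV T" unfolding e_def using T False by (rule bij_betw_from_nat_into)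
  have eT: "e n \<in> T" for n using e bij_betwE by blast
  have "(\<lambda>n. norm (a (e n))) summable_on UNIV" using a summable_on_reindex_bij_betw[OF e, of "\<lambda>t. norm (a t)"] by simp
  then have na: "summable (\<lambda>n. norm (a (e n)))" by (rule summable_on_imp_summable)
  have Cn: "C \<ge> 0" if "T \<noteq> {}"
  proof -
    from that obtain t where "t \<in> T" by blast
    have "0 \<le> (\<integral>x. norm (g t x) \<partial>M)" by simp
    also have "\<dots> \<le> C" using gn[OF \<open>t \<in> T\<close>] .
    finally show ?thesis .
  qed
  have TnE: "T \<noteq> {}" using False by auto
  define f where "f n x = a (e n) * g (e n) x" for n x
  have ptw: "summable (\<lambda>n. norm (f n x))" if x: "x \<in> space M" for x
  proof (rule summable_comparison_test'[of "\<lambda>n. norm (a (e n)) * D" 0])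
    show "summable (\<lambda>n. norm (a (e n)) * D)" using na by (rule summable_mult2)
    show "norm (norm (f n x)) \<le> norm (a (e n)) * D" for n
      unfolding f_def using gb[OF eT x] by (simp add: norm_mult mult_left_mono)
  qed
  have Fs: "F x = (\<Sum>n. f n x)" if x: "x \<in> space M" for x
    unfolding F[OF x] f_def by (rule infsum_as_suminf[OF e]) (use ptw[OF x] in \<open>simp add: f_def\<close>)
  have fi: "integrable M (f n)" for n unfolding f_def using gi[OF eT] by (rule integrable_mult_right)
  have ns: "summable (\<lambda>n. \<integral>x. norm (f n x) \<partial>M)"
  proof (rule summable_comparison_test'[of "\<lambda>n. norm (a (e n)) * C" 0])
    show "summable (\<lambda>n. norm (a (e n)) * C)" using na by (rule summable_mult2)
    show "norm (\<integral>x. norm (f n x) \<partial>M) \<le> norm (a (e n)) * C" for n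
    proof -
      have "(\<integral>x. norm (f n x) \<partial>M) = norm (a (e n)) * (\<integral>x. norm (g (e n) x) \<partial>M)"
        unfolding f_def by (simp add: norm_mult)
      also have "\<dots> \<le> norm (a (e n)) * C" using gn[OF eT] by (intro mult_left_mono) auto
      finally show ?thesis by (simp add: integral_nonneg_AE)
    qed
  qed
  have AE: "AE x in M. summable (\<lambda>n. norm (f n x))" using ptw by (intro AE_I2)
  have I1: "integrable M (\<lambda>x. \<Sum>n. f n x)" by (rule integrable_suminf[OF fi AE ns])
  have I2: "(\<integral>x. (\<Sum>n. f n x) \<partial>M) = (\<Sum>n. integral\<^sup>L M (f n))" by (rule integral_suminf[OF fi AE ns])
  have I: "integrable M F" using I1 Fs by (subst Bochner_Integration.integrable_cong[OF refl Fs]) auto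
  have "integral\<^sup>L M F = (\<integral>x. (\<Sum>n. f n x) \<partial>M)" using Fs by (intro Bochner_Integration.integral_cong) auto
  also have "\<dots> = (\<Sum>n. integral\<^sup>L M (f n))" by (rule I2)
  also have "\<dots> = (\<Sum>n. a (e n) * integral\<^sup>L M (g (e n)))" unfolding f_def by simp
  also have "\<dots> = (\<Sum>\<^sub>\<infinity>t\<in>T. a t * integral\<^sup>L M (g t))"
  proof (rule infsum_as_suminf[OF e, symmetric])
    show "summable (\<lambda>n. norm (a (e n) * integral\<^sup>L M (g (e n))))"
    proof (rule summable_comparison_test'[of "\<lambda>n. norm (a (e n)) * C" 0])
      show "summable (\<lambda>n. norm (a (e n)) * C)" using na by (rule summable_mult2)
      show "norm (norm (a (e n) * integral\<^sup>L M (g (e n)))) \<le> norm (a (e n)) * C" for n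
      proof -
        have "norm (integral\<^sup>L M (g (e n))) \<le> (\<integral>x. norm (g (e n) x) \<partial>M)" by (rule integral_norm_bound)
        also have "\<dots> \<le> C" using gn[OF eT] .
        finally show ?thesis by (simp add: norm_mult mult_left_mono)
      qed
    qed
  qed
  finally show ?thesis using I by simp
qed

lemma set_integral_infsum_exchange:
  fixes a :: "'t \<Rightarrow> complex" and g :: "'t \<Rightarrow> 'a \<Rightarrow> complex"
  assumes T: "countable T" and a: "(\<lambda>t. norm (a t)) summable_on T"
    and S: "S \<in> sets M" "emeasure M S < \<infinity>"
    and gm: "\<And>t. t \<in> T \<Longrightarrow> g t \<in> borel_measurable M"
    and gb: "\<And>t x. t \<in> T \<Longrightarrow> x \<in> S \<Longrightarrow> norm (g t x) \<le> D"
    and D: "D \<ge> 0"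
    and F: "\<And>x. x \<in> S \<Longrightarrow> F x = (\<Sum>\<^sub>\<infinity>t\<in>T. a t * g t x)"
  shows "set_integrable M S F \<and> (LINT x:S|M. F x) = (\<Sum>\<^sub>\<infinity>t\<in>T. a t * (LINT x:S|M. g t x))"
proof -
  have IR: "integrable M (\<lambda>x. D * indicator S x :: real)"
    using S by (intro integrable_mult_right integrable_real_indicator) auto
  have R: "integrable M (\<lambda>x. indicator S x *\<^sub>R F x) \<and> integral\<^sup>L M (\<lambda>x. indicator S x *\<^sub>R F x) =
      (\<Sum>\<^sub>\<infinity>t\<in>T. a t * integral\<^sup>L M (\<lambda>x. indicator S x *\<^sub>R g t x))"
  proof (rule integral_infsum_exchange[OF T a])
    fix t assume t: "t \<in> T"
    show "integrable M (\<lambda>x. indicator S x *\<^sub>R g t x)"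
      by (rule integrableI_bounded_set_indicator[where B=D]) (use S gm[OF t] gb[OF t] in auto)
    show "norm (indicator S x *\<^sub>R g t x) \<le> D" for x
      using gb[OF t, of x] D by (auto split: split_indicator)
    show "(\<integral>x. norm (indicator S x *\<^sub>R g t x) \<partial>M) \<le> integral\<^sup>L M (\<lambda>x. D * indicator S x)"
    proof (rule integral_mono[OF _ IR])
      show "integrable M (\<lambda>x. norm (indicator S x *\<^sub>R g t x))"
        by (rule integrable_norm, rule integrableI_bounded_set_indicator[where B=D]) (use S gm[OF t] gb[OF t] in auto)
      show "norm (indicator S x *\<^sub>R g t x) \<le> D * indicator S x" for x
        using gb[OF t, of x] D by (auto split: split_indicator)
    qed
  next
    fix x assume "x \<in> space M"
    show "indicator S x *\<^sub>R F x = (\<Sum>\<^sub>\<infinity>t\<in>T. a t * (indicator S x *\<^sub>R g t x))"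
      by (cases "x \<in> S") (auto simp: F)
  qed
  then show ?thesis unfolding set_integrable_def set_lebesgue_integral_def by simp
qed


definition E1 :: "real \<Rightarrow> complex" where
  "E1 \<theta> = exp (- 2 * of_real pi * \<i> * of_real \<theta>)"

definition phase :: "nat \<Rightarrow> (nat \<Rightarrow> real) \<Rightarrow> (nat \<Rightarrow> real) \<Rightarrow> real" where
  "phase d M w = (\<Sum>k<d. M k * w k)"

lemma E1_add: "E1 (x + y) = E1 x * E1 y"
proof -
  have "- 2 * of_real pi * \<i> * of_real (x+y) = (- 2 * of_real pi * \<i> * of_real x) + (- 2 * of_real pi * \<i> * of_real y)"
    by (simp add: algebra_simps)
  then show ?thesis by (simp only: E1_def exp_add)
qed

lemma E1_zero[simp]: "E1 0 = 1" unfolding E1_def by simp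

lemma E1_sum: "E1 (\<Sum>i\<in>I. f i) = (\<Prod>i\<in>I. E1 (f i))"
  by (induction I rule: infinite_finite_induct) (auto simp: E1_add)

lemma norm_E1[simp]: "norm (E1 x) = 1"
proof -
  have "E1 x = exp (\<i> * of_real (- 2 * pi * x))" unfolding E1_def by (simp add: algebra_simps)
  then show ?thesis by simp
qed

lemma E1_plus_E1_neg: "E1 x + E1 (- x) = of_real (2 * cos (2 * pi * x))"
proof -
  have "E1 x + E1 (-x) = 2 * cos (complex_of_real (2 * pi * x))"
    unfolding cos_exp_eq E1_def by (simp add: algebra_simps)
  also have "\<dots> = of_real (2 * cos (2 * pi * x))" by (simp only: cos_of_real) simp
  finally show ?thesis .
qed

lemma continuous_E1: "continuous_on S E1"
  unfolding E1_def by (intro continuous_intros)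

lemma E1_measurable[measurable]: "E1 \<in> borel_measurable borel"
  using continuous_E1 by (rule borel_measurable_continuous_onI)

lemma cyc1: "d = Suc m \<Longrightarrow> phase d M (cyc_perm d y) = (\<Sum>k<d. M ((k+1) mod d) * y k)"
proof -
  assume d: "d = Suc m"
  have "phase d M (cyc_perm d y) = M 0 * y m + (\<Sum>k<m. M (Suc k) * y k)"
    unfolding phase_def d by (subst sum.lessThan_Suc_shift) (simp add: cyc_perm_def)
  also have "\<dots> = (\<Sum>k<d. M ((k+1) mod d) * y k)"
    unfolding d by (subst sum.lessThan_Suc) (auto intro!: sum.cong)
  finally show ?thesis .
qed

lemma phase_cyc:
  assumes d: "d \<ge> 1"
  shows "phase d M ((cyc_perm d ^^ j) x) = (\<Sum>k<d. M ((k+j) mod d) * x k)"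
proof (induction j arbitrary: M)
  case 0
  then show ?case unfolding phase_def by (intro sum.cong) auto
next
  case (Suc j)
  obtain m where m: "d = Suc m" using d by (cases d) auto
  have "phase d M ((cyc_perm d ^^ Suc j) x) = phase d M (cyc_perm d ((cyc_perm d ^^ j) x))" by simp
  also have "\<dots> = phase d (\<lambda>k. M ((k+1) mod d)) ((cyc_perm d ^^ j) x)"
    unfolding cyc1[OF m] by (simp add: phase_def)
  also have "\<dots> = (\<Sum>k<d. M (((k+j) mod d + 1) mod d) * x k)" by (rule Suc.IH)
  also have "\<dots> = (\<Sum>k<d. M ((k + Suc j) mod d) * x k)"
    by (intro sum.cong refl) (simp add: mod_Suc_eq)
  finally show ?case .
qed

lemma phase_pyr:
  assumes d: "d = Suc m"
  shows "(\<Sum>k<d. N k * pyr_vec d p v k) = (\<Sum>l<m. N l * (2 * p l * v l)) + N m"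
  unfolding d by (subst sum.lessThan_Suc) (auto simp: pyr_vec_def intro!: sum.cong)

lemma E1_explicit:
  assumes d: "d = Suc m"
  shows "E1 (u * phase d M ((cyc_perm d ^^ j) (pyr_vec d p v))) =
    E1 (u * M ((m + j) mod d)) * (\<Prod>l<m. E1 (2 * u * M ((l + j) mod d) * p l * v l))"
proof -
  have "u * phase d M ((cyc_perm d ^^ j) (pyr_vec d p v)) =
        u * M ((m + j) mod d) + (\<Sum>l<m. 2 * u * M ((l + j) mod d) * p l * v l)"
  proof -
    have d1: "d \<ge> 1" using d by simp
    show ?thesis unfolding phase_cyc[OF d1] phase_pyr[OF d]
      by (simp add: sum_distrib_left algebra_simps)
  qed
  then show ?thesis by (simp add: E1_add E1_sum)
qed


lemma product_sigma_finite_lborel: "product_sigma_finite (\<lambda>_::nat. lborel :: real measure)"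
  unfolding product_sigma_finite_def by (simp add: lborel.sigma_finite_measure_axioms)

lemma sigma_finite_PiM_lborel: "finite I \<Longrightarrow> sigma_finite_measure (PiM I (\<lambda>_::nat. lborel :: real measure))"
  by (rule product_sigma_finite.sigma_finite[OF product_sigma_finite_lborel])

lemma set_integral_PiE_prod:
  fixes f :: "nat \<Rightarrow> real \<Rightarrow> complex"
  assumes I: "finite I" and fi: "\<And>i. i \<in> I \<Longrightarrow> set_integrable lborel (S i) (f i)"
  shows "(LINT v:PiE I S|PiM I (\<lambda>_. lborel). \<Prod>i\<in>I. f i (v i)) = (\<Prod>i\<in>I. LINT x:S i|lborel. f i x)"
proof -
  interpret product_sigma_finite "\<lambda>_::nat. lborel :: real measure" by (rule product_sigma_finite_lborel)
  have "integral\<^sup>L (PiM I (\<lambda>_. lborel)) (\<lambda>v. indicator (PiE I S) v *\<^sub>R (\<Prod>i\<in>I. f i (v i))) =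
        integral\<^sup>L (PiM I (\<lambda>_. lborel)) (\<lambda>v. \<Prod>i\<in>I. indicator (S i) (v i) *\<^sub>R f i (v i))"
  proof (intro Bochner_Integration.integral_cong refl)
    fix v assume v: "v \<in> space (PiM I (\<lambda>_. lborel :: real measure))"
    then have ext: "v \<in> extensional I" by (simp add: space_PiM PiE_iff)
    show "indicator (PiE I S) v *\<^sub>R (\<Prod>i\<in>I. f i (v i)) = (\<Prod>i\<in>I. indicator (S i) (v i) *\<^sub>R f i (v i))"
    proof (cases "\<forall>i\<in>I. v i \<in> S i")
      case True
      then have "v \<in> PiE I S" using ext by (simp add: PiE_iff)
      then show ?thesis using True by (simp add: indicator_def)
    next
      case False
      then obtain i where i: "i \<in> I" "v i \<notin> S i" by blast
      then have "v \<notin> PiE I S" by (auto simp: PiE_iff)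
      moreover have "(\<Prod>i\<in>I. indicator (S i) (v i) *\<^sub>R f i (v i)) = 0"
        apply (rule prod_zero[OF I])
        apply (rule bexI[of _ i])
        using i by auto
      ultimately show ?thesis by simp
    qed
  qed
  also have "\<dots> = (\<Prod>i\<in>I. integral\<^sup>L lborel (\<lambda>x. indicator (S i) x *\<^sub>R f i x))"
    using fi I by (intro product_integral_prod) (auto simp: set_integrable_def)
  finally show ?thesis unfolding set_lebesgue_integral_def .
qed

lemma set_integral_sum':
  fixes f :: "'i \<Rightarrow> 'a \<Rightarrow> 'b::{banach, second_countable_topology}"
  assumes "\<And>i. i \<in> I \<Longrightarrow> set_integrable M S (f i)"
  shows "(LINT x:S|M. \<Sum>i\<in>I. f i x) = (\<Sum>i\<in>I. LINT x:S|M. f i x)"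
  unfolding set_lebesgue_integral_def scaleR_sum_right
  using assms by (intro Bochner_Integration.integral_sum) (auto simp: set_integrable_def)

lemma set_integrable_sum':
  fixes f :: "'i \<Rightarrow> 'a \<Rightarrow> 'b::{banach, second_countable_topology}"
  assumes "\<And>i. i \<in> I \<Longrightarrow> set_integrable M S (f i)"
  shows "set_integrable M S (\<lambda>x. \<Sum>i\<in>I. f i x)"
  unfolding set_integrable_def scaleR_sum_right
  using assms by (intro Bochner_Integration.integrable_sum) (auto simp: set_integrable_def)

lemma norm_set_integral_le:
  fixes f :: "'a \<Rightarrow> 'b::{banach, second_countable_topology}"
  assumes S: "S \<in> sets M" "emeasure M S < \<infinity>" and fi: "set_integrable M S f"
    and b: "\<And>x. x \<in> S \<Longrightarrow> norm (f x) \<le> B"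
  shows "norm (LINT x:S|M. f x) \<le> B * measure M S"
proof -
  have "norm (LINT x:S|M. f x) \<le> integral\<^sup>L M (\<lambda>x. norm (indicator S x *\<^sub>R f x))"
    unfolding set_lebesgue_integral_def by (rule integral_norm_bound)
  also have "\<dots> \<le> integral\<^sup>L M (\<lambda>x. B * indicator S x)"
  proof (rule integral_mono)
    show "integrable M (\<lambda>x. norm (indicator S x *\<^sub>R f x))" using fi unfolding set_integrable_def by (rule integrable_norm)
    show "integrable M (\<lambda>x. B * indicator S x)" using S by (intro integrable_mult_right integrable_real_indicator) auto
    show "norm (indicator S x *\<^sub>R f x) \<le> B * indicator S x" for x
      using b[of x] by (auto split: split_indicator)
  qed
  also have "\<dots> = B * measure M S" using S by (simp add: Int_absorb2 sets.sets_into_space)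
  finally show ?thesis .
qed

lemma measure_half: "measure lborel {0..1/2::real} = 1/2"
  by simp

lemma E1_set_integrable: "set_integrable lborel {a..b} (\<lambda>x. E1 (c * x))"
  by (rule borel_integrable_atLeastAtMost') (intro continuous_on_compose2[OF continuous_E1] continuous_intros, auto)

lemma emeasure_half_finite: "emeasure lborel {0..1/2::real} < \<infinity>"
proof -
  have "emeasure lborel {0..1/2::real} = ennreal (1/2 - 0)" by (rule emeasure_lborel_Icc) simp
  also have "\<dots> < \<infinity>" by (simp only: ennreal_less_top infinity_ennreal_def)
  finally show ?thesis .
qed

lemma norm_G_le: "norm (LINT x:{0..1/2}|lborel. E1 (c * x)) \<le> 1"
proof -
  have "norm (LINT x:{0..1/2}|lborel. E1 (c * x)) \<le> 1 * measure lborel {0..1/2::real}"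
    by (rule norm_set_integral_le[OF _ emeasure_half_finite]) (auto simp: E1_set_integrable)
  then show ?thesis by (simp add: measure_half)
qed

definition Cf :: "real \<Rightarrow> real" where
  "Cf c = (if c = 0 then 1 else sin (pi * c) / (pi * c))"

lemma G_pair: "(LINT x:{0..1/2}|lborel. E1 (c * x)) + (LINT x:{0..1/2}|lborel. E1 (- c * x)) = of_real (Cf c)"
proof -
  have "(LINT x:{0..1/2}|lborel. E1 (c * x)) + (LINT x:{0..1/2}|lborel. E1 (- c * x)) =
        (LINT x:{0..1/2}|lborel. E1 (c * x) + E1 (- (c * x)))"
    by (subst set_integral_add(2)) (auto simp: E1_set_integrable[of _ _ "-c", simplified] E1_set_integrable)
  also have "\<dots> = (LINT x:{0..1/2}|lborel. complex_of_real (2 * cos (2 * pi * (c * x))))"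
    by (simp only: E1_plus_E1_neg)
  also have "\<dots> = of_real (LINT x:{0..1/2}|lborel. 2 * cos (2 * pi * (c * x)))"
    by (rule set_integral_complex_of_real)
  also have "(LINT x:{0..1/2}|lborel. 2 * cos (2 * pi * (c * x))) = Cf c"
  proof -
    define F where "F x = (if c = 0 then 2 * x else sin (2 * pi * c * x) / (pi * c))" for x
    have "(LINT x:{0..1/2}|lborel. 2 * cos (2 * pi * (c * x))) = F (1/2) - F 0"
      unfolding set_lebesgue_integral_def
    proof (rule integral_FTC_atLeastAtMost)
      fix x :: real
      show "(F has_vector_derivative 2 * cos (2 * pi * (c * x))) (at x within {0..1/2})"
      proof (cases "c = 0")
        case True
        then show ?thesis unfolding F_def
          by (auto intro!: derivative_eq_intros simp: has_real_derivative_iff_has_vector_derivative[symmetric])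
      next
        case False
        then show ?thesis unfolding F_def has_real_derivative_iff_has_vector_derivative[symmetric]
          by (auto intro!: derivative_eq_intros simp: field_simps)
      qed
    qed (auto intro!: continuous_intros)
    also have "\<dots> = Cf c" unfolding F_def Cf_def by (simp add: field_simps)
    finally show ?thesis .
  qed
  finally show ?thesis by simp
qed


definition innerI :: "nat \<Rightarrow> (nat \<Rightarrow> real) \<Rightarrow> nat \<Rightarrow> (nat \<Rightarrow> real) \<Rightarrow> real \<Rightarrow> complex" where
  "innerI d M j p u = (LINT v:(PiE {..<d - 1} (\<lambda>_. {0..1/2::real}))|(PiM {..<d - 1} (\<lambda>_. lborel)).
      complex_of_real (u ^ (d - 1)) * E1 (u * phase d M ((cyc_perm d ^^ j) (pyr_vec d p v))))"

lemma inner_explicit: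
  assumes d: "d = Suc m"
  shows "innerI d M j p u = of_real (u ^ m) * E1 (u * M ((m + j) mod d)) *
     (\<Prod>l<m. LINT x:{0..1/2}|lborel. E1 (2 * u * M ((l + j) mod d) * p l * x))"
proof -
  have dm: "d - 1 = m" using d by simp
  let ?V = "PiE {..<m} (\<lambda>_. {0..1/2::real})"
  let ?PM = "PiM {..<m} (\<lambda>_. lborel :: real measure)"
  have "innerI d M j p u = (LINT v:?V|?PM. of_real (u ^ m) * (E1 (u * M ((m + j) mod d)) * (\<Prod>l<m. E1 (2 * u * M ((l + j) mod d) * p l * v l))))"
    unfolding innerI_def dm E1_explicit[OF d] ..
  also have "\<dots> = of_real (u ^ m) * (E1 (u * M ((m + j) mod d)) * (LINT v:?V|?PM. (\<Prod>l<m. E1 (2 * u * M ((l + j) mod d) * p l * v l))))"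
    by (simp only: set_integral_mult_right)
  also have "(LINT v:?V|?PM. (\<Prod>l<m. E1 (2 * u * M ((l + j) mod d) * p l * v l)))
     = (\<Prod>l<m. LINT x:{0..1/2}|lborel. E1 (2 * u * M ((l + j) mod d) * p l * x))"
    by (rule set_integral_PiE_prod[where f="\<lambda>l x. E1 (2 * u * M ((l + j) mod d) * p l * x)"])
       (auto simp: E1_set_integrable)
  finally show ?thesis by (simp only: mult.assoc)
qed

lemma inner_bound:
  assumes d: "d = Suc m" and u: "u \<in> {0..1/2}"
  shows "norm (innerI d M j p u) \<le> 1"
proof -
  have "norm (innerI d M j p u) = \<bar>u\<bar> ^ m * (\<Prod>l<m. norm (LINT x:{0..1/2}|lborel. E1 (2 * u * M ((l + j) mod d) * p l * x)))"
    unfolding inner_explicit[OF d] by (simp add: norm_mult prod_norm norm_power)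
  also have "\<dots> \<le> 1 * 1"
  proof (rule mult_mono)
    show "\<bar>u\<bar> ^ m \<le> 1" using u by (intro power_le_one) auto
    show "(\<Prod>l<m. norm (LINT x:{0..1/2}|lborel. E1 (2 * u * M ((l + j) mod d) * p l * x))) \<le> 1"
      by (rule prod_le_1) (auto simp: norm_G_le)
  qed (auto intro: prod_nonneg)
  finally show ?thesis by simp
qed

lemma inner_meas:
  assumes d: "d = Suc m"
  shows "(\<lambda>u. innerI d M j p u) \<in> borel_measurable lborel"
proof -
  let ?V = "PiE {..<m} (\<lambda>_. {0..1/2::real})"
  let ?PM = "PiM {..<m} (\<lambda>_. lborel :: real measure)"
  interpret PM: sigma_finite_measure ?PM by (rule sigma_finite_PiM_lborel) simp
  have V[measurable]: "?V \<in> sets ?PM" by (rule sets_PiM_I_finite) auto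
  have dm: "d - 1 = m" using d by simp
  have eq: "innerI d M j p u = integral\<^sup>L ?PM (\<lambda>v. indicator ?V v *\<^sub>R
      (of_real (u ^ m) * (E1 (u * M ((m + j) mod d)) * (\<Prod>l<m. E1 (2 * u * M ((l + j) mod d) * p l * v l)))))" for u
    unfolding innerI_def set_lebesgue_integral_def dm E1_explicit[OF d] ..
  show ?thesis unfolding eq
    by measurable
qed


definition Sf :: "real \<Rightarrow> real \<Rightarrow> real" where
  "Sf a u = (if a = 0 then 2 * u else sin (2 * pi * a * u) / (pi * a))"

lemma Sf_Cf: "2 * u * Cf (2 * u * a) = Sf a u"
proof (cases "a = 0")
  case True then show ?thesis by (simp add: Sf_def Cf_def)
next
  case False
  show ?thesis
  proof (cases "u = 0")
    case True then show ?thesis using False by (simp add: Sf_def Cf_def)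
  next
    case u: False
    have "sin (pi * (2 * u * a)) = sin (2 * pi * a * u)" by (simp add: mult_ac)
    then show ?thesis using False u by (simp add: Sf_def Cf_def field_simps)
  qed
qed

lemma Sf_neg: "Sf (- a) u = Sf a u"
  by (simp add: Sf_def)

lemma continuous_Sf: "continuous_on S (Sf a)"
  unfolding Sf_def by (cases "a = 0") (auto intro!: continuous_intros)

lemma Sf_deriv: "(Sf a has_real_derivative 2 * cos (2 * pi * (u * a))) (at u within S)"
proof (cases "a = 0")
  case True then show ?thesis unfolding Sf_def by (auto intro!: derivative_eq_intros)
next
  case False
  have "((\<lambda>u. sin (2 * pi * a * u) / (pi * a)) has_real_derivative 2 * cos (2 * pi * (u * a))) (at u within S)"
    using False by (auto intro!: derivative_eq_intros simp: field_simps mult_ac)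
  then show ?thesis unfolding Sf_def using False by simp
qed

lemma inner_psum:
  assumes d: "d = Suc m"
  shows "2 ^ d * (\<Sum>p\<in>PiE {..<m} (\<lambda>_. {-1, 1::real}). innerI d M j p u) =
    2 * E1 (u * M ((m + j) mod d)) * of_real (\<Prod>l<m. Sf (M ((l + j) mod d)) u)"
proof -
  define G where "G l s = (LINT x:{0..1/2}|lborel. E1 (2 * u * M ((l + j) mod d) * s * x))" for l s
  have GP: "G l (-1) + G l 1 = of_real (Cf (2 * u * M ((l + j) mod d)))" for l
  proof -
    have "G l 1 = (LINT x:{0..1/2}|lborel. E1 ((2 * u * M ((l + j) mod d)) * x))" unfolding G_def by simp
    moreover have "G l (-1) = (LINT x:{0..1/2}|lborel. E1 (- (2 * u * M ((l + j) mod d)) * x))" unfolding G_def by simp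
    ultimately show ?thesis using G_pair[of "2 * u * M ((l + j) mod d)"] by (simp add: add.commute)
  qed
  have "(\<Sum>p\<in>PiE {..<m} (\<lambda>_. {-1, 1::real}). innerI d M j p u) =
      (\<Sum>p\<in>PiE {..<m} (\<lambda>_. {-1, 1::real}). of_real (u ^ m) * E1 (u * M ((m + j) mod d)) * (\<Prod>l<m. G l (p l)))"
    unfolding inner_explicit[OF d] G_def ..
  also have "\<dots> = of_real (u ^ m) * E1 (u * M ((m + j) mod d)) * (\<Sum>p\<in>PiE {..<m} (\<lambda>_. {-1, 1::real}). \<Prod>l<m. G l (p l))"
    by (simp add: sum_distrib_left)
  also have "(\<Sum>p\<in>PiE {..<m} (\<lambda>_. {-1, 1::real}). \<Prod>l<m. G l (p l)) = (\<Prod>l<m. \<Sum>s\<in>{-1, 1::real}. G l s)"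
    by (rule prod_sum_PiE[symmetric]) auto
  also have "\<dots> = (\<Prod>l<m. of_real (Cf (2 * u * M ((l + j) mod d))))"
    by (intro prod.cong refl) (simp add: GP)
  finally have 1: "(\<Sum>p\<in>PiE {..<m} (\<lambda>_. {-1, 1::real}). innerI d M j p u) =
     of_real (u ^ m) * E1 (u * M ((m + j) mod d)) * of_real (\<Prod>l<m. Cf (2 * u * M ((l + j) mod d)))" by simp
  have 2: "(\<Prod>l<m. Sf (M ((l + j) mod d)) u) = (2 * u) ^ m * (\<Prod>l<m. Cf (2 * u * M ((l + j) mod d)))"
    by (simp add: Sf_Cf[symmetric] prod.distrib)
  show ?thesis by (simp only: 1 2) (simp add: d power_mult_distrib mult_ac)
qed

definition Tp :: "nat \<Rightarrow> (nat \<Rightarrow> real) \<Rightarrow> complex" where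
  "Tp d M = 2 ^ d * (\<Sum>p\<in>PiE {..<d - 1} (\<lambda>_. {-1, 1::real}). \<Sum>j<d. LINT u:{0..1/2}|lborel. innerI d M j p u)"

lemma inner_integrable:
  assumes d: "d = Suc m"
  shows "set_integrable lborel {0..1/2} (innerI d M j p)"
  unfolding set_integrable_def
  by (rule integrableI_bounded_set_indicator[where B=1])
     (use inner_meas[OF d] emeasure_half_finite inner_bound[OF d] in auto)

lemma Tp_eq:
  assumes d: "d = Suc m"
  shows "Tp d M = (\<Sum>j<d. LINT u:{0..1/2}|lborel. 2 * E1 (u * M ((m + j) mod d)) * of_real (\<Prod>l<m. Sf (M ((l + j) mod d)) u))"
proof -
  have dm: "d - 1 = m" using d by simp
  have "Tp d M = 2 ^ d * (\<Sum>j<d. \<Sum>p\<in>PiE {..<m} (\<lambda>_. {-1, 1::real}). LINT u:{0..1/2}|lborel. innerI d M j p u)"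
    unfolding Tp_def dm by (subst sum.swap) rule
  also have "\<dots> = 2 ^ d * (\<Sum>j<d. LINT u:{0..1/2}|lborel. (\<Sum>p\<in>PiE {..<m} (\<lambda>_. {-1, 1::real}). innerI d M j p u))"
    by (subst set_integral_sum') (auto intro: inner_integrable[OF d])
  also have "\<dots> = (\<Sum>j<d. 2 ^ d * (LINT u:{0..1/2}|lborel. (\<Sum>p\<in>PiE {..<m} (\<lambda>_. {-1, 1::real}). innerI d M j p u)))"
    by (rule sum_distrib_left)
  also have "\<dots> = (\<Sum>j<d. LINT u:{0..1/2}|lborel. 2 * E1 (u * M ((m + j) mod d)) * of_real (\<Prod>l<m. Sf (M ((l + j) mod d)) u))"
  proof (intro sum.cong refl)
    fix j
    have "2 ^ d * (LINT u:{0..1/2}|lborel. (\<Sum>p\<in>PiE {..<m} (\<lambda>_. {-1, 1::real}). innerI d M j p u)) =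
       (LINT u:{0..1/2}|lborel. 2 ^ d * (\<Sum>p\<in>PiE {..<m} (\<lambda>_. {-1, 1::real}). innerI d M j p u))"
      by (rule set_integral_mult_right[symmetric])
    also have "\<dots> = (LINT u:{0..1/2}|lborel. 2 * E1 (u * M ((m + j) mod d)) * of_real (\<Prod>l<m. Sf (M ((l + j) mod d)) u))"
      by (simp only: inner_psum[OF d])
    finally show "2 ^ d * (LINT u:{0..1/2}|lborel. (\<Sum>p\<in>PiE {..<m} (\<lambda>_. {-1, 1::real}). innerI d M j p u)) =
       (LINT u:{0..1/2}|lborel. 2 * E1 (u * M ((m + j) mod d)) * of_real (\<Prod>l<m. Sf (M ((l + j) mod d)) u))" .
  qed
  finally show ?thesis .
qed


lemma inj_mod_shift: "inj_on (\<lambda>l. (l + j) mod d) {..<(d::nat)}"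
proof
  fix x y assume x: "x \<in> {..<d}" and y: "y \<in> {..<d}" and e: "(x + j) mod d = (y + j) mod d"
  show "x = y"
  proof (rule ccontr)
    assume "x \<noteq> y"
    then consider "x < y" | "y < x" by linarith
    then show False
    proof cases
      case 1
      then have "d dvd (y + j) - (x + j)" using e by (subst mod_eq_dvd_iff_nat[symmetric]) auto
      then have "d dvd y - x" by simp
      moreover have "0 < y - x" "y - x < d" using 1 y by auto
      ultimately show False using nat_dvd_not_less by blast
    next
      case 2
      then have "d dvd (x + j) - (y + j)" using e by (subst mod_eq_dvd_iff_nat[symmetric]) auto
      then have "d dvd x - y" by simp
      moreover have "0 < x - y" "x - y < d" using 2 x by auto
      ultimately show False using nat_dvd_not_less by blast
    qed
  qed
qed

lemma sum_cyc:
  assumes d: "d = Suc m"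
  shows "(\<Sum>j<d. F ((m + j) mod d)) = (\<Sum>k<d. F k)"
proof -
  have inj: "inj_on (\<lambda>j. (j + m) mod d) {..<d}" by (rule inj_mod_shift)
  have "(\<lambda>j. (j + m) mod d) ` {..<d} = {..<d}"
    by (rule endo_inj_surj[OF _ _ inj]) (use d in auto)
  then have "bij_betw (\<lambda>j. (j + m) mod d) {..<d} {..<d}" using inj by (simp add: bij_betw_def)
  then have "(\<Sum>j<d. F ((j + m) mod d)) = (\<Sum>k<d. F k)" by (rule sum.reindex_bij_betw)
  then show ?thesis by (simp add: add.commute)
qed

lemma prod_cyc:
  assumes d: "d = Suc m"
  shows "(\<Prod>l<m. F ((l + j) mod d)) = (\<Prod>i\<in>{..<d} - {(m + j) mod d}. F i)"
proof -
  have inj: "inj_on (\<lambda>l. (l + j) mod d) {..<d}" by (rule inj_mod_shift)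
  then have inj': "inj_on (\<lambda>l. (l + j) mod d) {..<m}" by (rule inj_on_subset) (use d in auto)
  have sub: "(\<lambda>l. (l + j) mod d) ` {..<m} \<subseteq> {..<d} - {(m + j) mod d}"
  proof
    fix x assume "x \<in> (\<lambda>l. (l + j) mod d) ` {..<m}"
    then obtain l where l: "l < m" "x = (l + j) mod d" by blast
    have "x < d" using l d by simp
    moreover have "x \<noteq> (m + j) mod d"
    proof
      assume "x = (m + j) mod d"
      then have "(l + j) mod d = (m + j) mod d" using l by simp
      then have "l = m" by (rule inj_onD[OF inj]) (use l d in auto)
      then show False using l by simp
    qed
    ultimately show "x \<in> {..<d} - {(m + j) mod d}" by simp
  qed
  have c1: "card ((\<lambda>l. (l + j) mod d) ` {..<m}) = m" using card_image[OF inj'] by simp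
  have c2: "card ({..<d} - {(m + j) mod d}) = m" using d by simp
  have "card ((\<lambda>l. (l + j) mod d) ` {..<m}) = card ({..<d} - {(m + j) mod d})"
    using c1 c2 by simp
  then have "(\<lambda>l. (l + j) mod d) ` {..<m} = {..<d} - {(m + j) mod d}"
    by (rule card_subset_eq[OF finite_Diff[OF finite_lessThan] sub])
  then have "bij_betw (\<lambda>l. (l + j) mod d) {..<m} ({..<d} - {(m + j) mod d})"
    using inj' by (simp add: bij_betw_def)
  then show ?thesis by (rule prod.reindex_bij_betw)
qed

lemma FTC_P:
  "(LINT u:{0..1/2}|lborel. \<Sum>k<d. 2 * cos (2 * pi * (u * M k)) * (\<Prod>i\<in>{..<d} - {k}. Sf (M i) u)) =
   (\<Prod>i<d. Sf (M i) (1/2)) - (\<Prod>i<d. Sf (M i) 0)"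
  unfolding set_lebesgue_integral_def
proof (rule integral_FTC_atLeastAtMost)
  fix x :: real
  have "((\<lambda>u. \<Prod>i<d. Sf (M i) u) has_derivative
      (\<lambda>y. \<Sum>i<d. (*) (2 * cos (2 * pi * (x * M i))) y * (\<Prod>j\<in>{..<d} - {i}. Sf (M j) x))) (at x within {0..1/2})"
    by (rule has_derivative_prod) (rule Sf_deriv[unfolded has_field_derivative_def])
  moreover have "(\<lambda>y. \<Sum>i<d. (*) (2 * cos (2 * pi * (x * M i))) y * (\<Prod>j\<in>{..<d} - {i}. Sf (M j) x)) =
     (\<lambda>y. y *\<^sub>R (\<Sum>k<d. 2 * cos (2 * pi * (x * M k)) * (\<Prod>i\<in>{..<d} - {k}. Sf (M i) x)))"
  proof
    fix y :: real
    show "(\<Sum>i<d. (*) (2 * cos (2 * pi * (x * M i))) y * (\<Prod>j\<in>{..<d} - {i}. Sf (M j) x)) =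
      y *\<^sub>R (\<Sum>k<d. 2 * cos (2 * pi * (x * M k)) * (\<Prod>i\<in>{..<d} - {k}. Sf (M i) x))"
      unfolding real_scaleR_def sum_distrib_left by (intro sum.cong refl) simp
  qed
  ultimately show "((\<lambda>u. \<Prod>i<d. Sf (M i) u) has_vector_derivative
      (\<Sum>k<d. 2 * cos (2 * pi * (x * M k)) * (\<Prod>i\<in>{..<d} - {k}. Sf (M i) x))) (at x within {0..1/2})"
    unfolding has_vector_derivative_def by simp
next
  show "continuous_on {0..1/2} (\<lambda>u. \<Sum>k<d. 2 * cos (2 * pi * (u * M k)) * (\<Prod>i\<in>{..<d} - {k}. Sf (M i) u))"
    by (intro continuous_intros continuous_Sf)
qed simp

lemma Sf_half: "M \<in> \<int> \<Longrightarrow> Sf M (1/2) = (if M = 0 then 1 else 0)"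
proof -
  assume "M \<in> \<int>"
  then have "sin (M * pi) = 0" by (simp add: sin_times_pi_eq_0)
  then show ?thesis by (simp add: Sf_def mult_ac)
qed

lemma Sf_zero: "Sf a 0 = 0" by (simp add: Sf_def)

lemma cont_term: "continuous_on S (\<lambda>u. 2 * E1 (u * b) * complex_of_real (\<Prod>l<m. Sf (a l) u))"
  by (intro continuous_intros continuous_on_compose2[OF continuous_E1] continuous_on_compose2[OF continuous_Sf]) auto

lemma Tp_pair:
  assumes d: "d = Suc m" and Mint: "\<forall>k<d. M k \<in> \<int>"
  shows "Tp d M + Tp d (\<lambda>k. - M k) = (if \<forall>k<d. M k = 0 then 2 else 0)"
proof -
  define R where "R j u = (\<Prod>l<m. Sf (M ((l + j) mod d)) u)" for j u
  define b where "b j = M ((m + j) mod d)" for j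
  have Tm: "Tp d (\<lambda>k. - M k) = (\<Sum>j<d. LINT u:{0..1/2}|lborel. 2 * E1 (- (u * b j)) * of_real (R j u))"
    unfolding Tp_eq[OF d] R_def b_def by (simp add: Sf_neg)
  have Tpl: "Tp d M = (\<Sum>j<d. LINT u:{0..1/2}|lborel. 2 * E1 (u * b j) * of_real (R j u))"
    unfolding Tp_eq[OF d] R_def b_def ..
  have int1: "set_integrable lborel {0..1/2} (\<lambda>u. 2 * E1 (u * b j) * of_real (R j u))" for j
    unfolding R_def by (rule borel_integrable_atLeastAtMost') (rule cont_term)
  have int2: "set_integrable lborel {0..1/2} (\<lambda>u. 2 * E1 (- (u * b j)) * of_real (R j u))" for j
  proof -
    have "set_integrable lborel {0..1/2} (\<lambda>u. 2 * E1 (u * (- b j)) * of_real (R j u))"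
      unfolding R_def by (rule borel_integrable_atLeastAtMost') (rule cont_term)
    then show ?thesis by simp
  qed
  have intr: "set_integrable lborel {0..1/2} (\<lambda>u. 2 * (2 * cos (2 * pi * (u * b j))) * R j u)" for j
    unfolding R_def by (rule borel_integrable_atLeastAtMost') (intro continuous_intros continuous_Sf)
  have "Tp d M + Tp d (\<lambda>k. - M k) =
     (\<Sum>j<d. (LINT u:{0..1/2}|lborel. 2 * E1 (u * b j) * of_real (R j u)) + (LINT u:{0..1/2}|lborel. 2 * E1 (- (u * b j)) * of_real (R j u)))"
    unfolding Tm Tpl by (rule sum.distrib[symmetric])
  also have "\<dots> = (\<Sum>j<d. LINT u:{0..1/2}|lborel. 2 * E1 (u * b j) * of_real (R j u) + 2 * E1 (- (u * b j)) * of_real (R j u))"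
    by (intro sum.cong refl set_integral_add(2)[symmetric] int1 int2)
  also have "\<dots> = (\<Sum>j<d. LINT u:{0..1/2}|lborel. complex_of_real (2 * (2 * cos (2 * pi * (u * b j))) * R j u))"
  proof (intro sum.cong refl arg_cong[where f="set_lebesgue_integral _ _"] ext)
    fix j u
    have "2 * E1 (u * b j) * of_real (R j u) + 2 * E1 (- (u * b j)) * of_real (R j u) =
      2 * (E1 (u * b j) + E1 (- (u * b j))) * of_real (R j u)" by (simp only: algebra_simps)
    also have "\<dots> = complex_of_real (2 * (2 * cos (2 * pi * (u * b j))) * R j u)"
      by (simp only: E1_plus_E1_neg of_real_mult of_real_numeral)
    finally show "2 * E1 (u * b j) * of_real (R j u) + 2 * E1 (- (u * b j)) * of_real (R j u) =
      complex_of_real (2 * (2 * cos (2 * pi * (u * b j))) * R j u)" .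
  qed
  also have "\<dots> = of_real (\<Sum>j<d. LINT u:{0..1/2}|lborel. 2 * (2 * cos (2 * pi * (u * b j))) * R j u)"
    by (simp only: set_integral_complex_of_real of_real_sum)
  also have "(\<Sum>j<d. LINT u:{0..1/2}|lborel. 2 * (2 * cos (2 * pi * (u * b j))) * R j u) =
      (LINT u:{0..1/2}|lborel. \<Sum>j<d. 2 * (2 * cos (2 * pi * (u * b j))) * R j u)"
    by (rule set_integral_sum'[symmetric]) (rule intr)
  also have "\<dots> = (LINT u:{0..1/2}|lborel. 2 * (\<Sum>k<d. 2 * cos (2 * pi * (u * M k)) * (\<Prod>i\<in>{..<d} - {k}. Sf (M i) u)))"
  proof (intro arg_cong[where f="set_lebesgue_integral _ _"] ext)
    fix u
    have "(\<Sum>j<d. 2 * (2 * cos (2 * pi * (u * b j))) * R j u) =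
       2 * (\<Sum>j<d. (\<lambda>k. 2 * cos (2 * pi * (u * M k)) * (\<Prod>i\<in>{..<d} - {k}. Sf (M i) u)) ((m + j) mod d))"
      unfolding R_def b_def sum_distrib_left by (intro sum.cong refl) (simp only: mult.assoc prod_cyc[OF d, of "\<lambda>i. Sf (M i) u"])
    also have "\<dots> = 2 * (\<Sum>k<d. 2 * cos (2 * pi * (u * M k)) * (\<Prod>i\<in>{..<d} - {k}. Sf (M i) u))"
      using sum_cyc[OF d, of "\<lambda>k. 2 * cos (2 * pi * (u * M k)) * (\<Prod>i\<in>{..<d} - {k}. Sf (M i) u)"] by simp
    finally show "(\<Sum>j<d. 2 * (2 * cos (2 * pi * (u * b j))) * R j u) =
       2 * (\<Sum>k<d. 2 * cos (2 * pi * (u * M k)) * (\<Prod>i\<in>{..<d} - {k}. Sf (M i) u))" .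
  qed
  also have "\<dots> = 2 * ((\<Prod>i<d. Sf (M i) (1/2)) - (\<Prod>i<d. Sf (M i) 0))"
    by (simp only: set_integral_mult_right FTC_P)
  also have "(\<Prod>i<d. Sf (M i) 0) = 0" using d by (simp add: Sf_zero)
  also have "(\<Prod>i<d. Sf (M i) (1/2)) = (if \<forall>k<d. M k = 0 then 1 else 0)"
  proof -
    have "(\<Prod>i<d. Sf (M i) (1/2)) = (\<Prod>i<d. if M i = 0 then 1 else 0)"
      using Mint by (intro prod.cong refl) (simp add: Sf_half)
    also have "\<dots> = (if \<forall>k<d. M k = 0 then 1 else 0)"
    proof (cases "\<forall>k<d. M k = 0")
      case True then show ?thesis by simp
    next
      case False
      then obtain k where k: "k < d" "M k \<noteq> 0" by blast
      have "(\<Prod>i<d. if M i = 0 then 1 else 0) = (0::real)"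
        by (rule prod_zero) (use k in auto)
      then show ?thesis using False by simp
    qed
    finally show ?thesis .
  qed
  finally show ?thesis by simp
qed


lemma infsum_finite_sum:
  fixes f :: "'i \<Rightarrow> 't \<Rightarrow> complex"
  assumes I: "finite I" and s: "\<And>i. i \<in> I \<Longrightarrow> f i summable_on T"
  shows "(\<Sum>i\<in>I. infsum (f i) T) = infsum (\<lambda>t. \<Sum>i\<in>I. f i t) T \<and> (\<lambda>t. \<Sum>i\<in>I. f i t) summable_on T"
  using I s
proof (induction I rule: finite_induct)
  case empty
  then show ?case by simp
next
  case (insert x F)
  then have IH: "(\<Sum>i\<in>F. infsum (f i) T) = infsum (\<lambda>t. \<Sum>i\<in>F. f i t) T" "(\<lambda>t. \<Sum>i\<in>F. f i t) summable_on T"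
    by auto
  have fx: "f x summable_on T" using insert by auto
  show ?case using insert IH fx by (simp add: infsum_add summable_on_add)
qed

lemma telescope_real: "(\<Sum>i\<in>{1..(n::nat)}. g i - g (i - 1)) = (g n - g 0 :: real)"
  by (induction n rule: nat.induct) (auto simp: sum.cl_ivl_Suc)

locale nb = lat +
  fixes n :: nat and \<nu> :: "nat \<Rightarrow> complex"
  assumes n1: "n \<ge> 1" and nu: "\<forall>i\<in>{1..n}. Re (\<nu> i) > real d"
begin

definition Lp where "Lp = Defs.lattice d A - {\<lambda>_. 0}"
definition T where "T = PiE {1..n} (\<lambda>_. Lp)"
definition a where "a t = (\<Prod>i=1..n. (of_real (vnorm d (t i)) :: complex) powr (- \<nu> i))"
definition Zs where "Zs t = (\<lambda>l. \<Sum>i\<in>{1..n}. t i l)"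
definition Mt where "Mt t = coeffs (Zs t)"

lemma countable_lattice: "countable (Defs.lattice d A)"
proof -
  have "Defs.lattice d A \<subseteq> (\<lambda>M. mat_vec d A (\<lambda>j. real_of_int (M j))) ` PiE {..<d} (\<lambda>_. UNIV::int set)"
    using lattice_repr by blast
  moreover have "countable (PiE {..<d} (\<lambda>_. UNIV::int set))" by (rule countable_PiE) auto
  ultimately show ?thesis by (meson countable_image countable_subset)
qed

lemma countable_T: "countable T"
  unfolding T_def Lp_def using countable_lattice by (intro countable_PiE) auto

lemma vnorm_pos: "z \<in> Lp \<Longrightarrow> vnorm d z > 0"
proof -
  assume z: "z \<in> Lp"
  then have L: "z \<in> Defs.lattice d A" and nz: "z \<noteq> (\<lambda>_. 0)" by (auto simp: Lp_def)
  have "\<exists>i<d. z i \<noteq> 0"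
  proof (rule ccontr)
    assume "\<not> (\<exists>i<d. z i \<noteq> 0)"
    then have "z = (\<lambda>_. 0)" using lattice_outside[OF L] by (auto simp: fun_eq_iff not_less)
    then show False using nz by simp
  qed
  then obtain i where i: "i < d" "z i \<noteq> 0" by blast
  have "0 < \<bar>z i\<bar>" using i by simp
  also have "\<dots> \<le> vnorm d z" using comp_le_vnorm[OF i(1)] .
  finally show ?thesis .
qed

lemma norm_powr_vnorm: "norm ((of_real (vnorm d z) :: complex) powr s) = vnorm d z powr (Re s)"
  by (subst norm_powr_real_powr) (auto simp: vnorm_nonneg)

lemma term_summable: "i \<in> {1..n} \<Longrightarrow> (\<lambda>z. norm ((of_real (vnorm d z) :: complex) powr (- \<nu> i))) summable_on Lp"
  unfolding norm_powr_vnorm Lp_def using nu by (auto intro!: epstein_abs_summable)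

lemma a_summable: "(\<lambda>t. norm (a t)) summable_on T"
  unfolding a_def T_def
  by (rule summable_on_prod_PiE_norm) (use countable_lattice term_summable in \<open>auto simp: Lp_def\<close>)

lemma epstein_expand:
  "(\<Prod>i=1..n. epstein_zeta d A (\<nu> i) k) = (\<Sum>\<^sub>\<infinity>t\<in>T. a t * E1 (vdot d (Zs t) k))"
proof -
  define \<phi> where "\<phi> i z = E1 (vdot d z k) * (of_real (vnorm d z) :: complex) powr (- \<nu> i)" for i z
  have ez: "epstein_zeta d A (\<nu> i) k = infsum (\<phi> i) Lp" for i
    unfolding epstein_zeta_def \<phi>_def E1_def Lp_def ..
  have "(\<Prod>i=1..n. epstein_zeta d A (\<nu> i) k) = (\<Prod>i\<in>{1..n}. infsum (\<phi> i) Lp)"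
    by (simp add: ez)
  also have "\<dots> = (\<Sum>\<^sub>\<infinity>t\<in>T. \<Prod>i\<in>{1..n}. \<phi> i (t i))"
    unfolding T_def
  proof (rule infsum_prod_PiE_abs[symmetric])
    fix i assume i: "i \<in> {1..n}"
    show "(\<lambda>z. norm (\<phi> i z)) summable_on Lp"
      using term_summable[OF i] by (simp add: \<phi>_def norm_mult)
  qed simp
  also have "\<dots> = (\<Sum>\<^sub>\<infinity>t\<in>T. a t * E1 (vdot d (Zs t) k))"
  proof (rule infsum_cong)
    fix t
    have "(\<Prod>i\<in>{1..n}. \<phi> i (t i)) = E1 (\<Sum>i\<in>{1..n}. vdot d (t i) k) * a t"
      unfolding \<phi>_def a_def E1_sum prod.distrib ..
    also have "(\<Sum>i\<in>{1..n}. vdot d (t i) k) = vdot d (Zs t) k"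
      unfolding vdot_def Zs_def sum_distrib_right by (rule sum.swap)
    finally show "(\<Prod>i\<in>{1..n}. \<phi> i (t i)) = a t * E1 (vdot d (Zs t) k)" by simp
  qed
  finally show ?thesis .
qed

lemma integrand_expand:
  "complex_of_real (u ^ (d - 1)) *
     (\<Prod>i=1..n. epstein_zeta d A (\<nu> i) (\<lambda>l. u * inv_transpose_apply d A ((cyc_perm d ^^ j) (pyr_vec d p v)) l)) =
   (\<Sum>\<^sub>\<infinity>t\<in>T. a t * (complex_of_real (u ^ (d - 1)) * E1 (u * phase d (Mt t) ((cyc_perm d ^^ j) (pyr_vec d p v)))))"
proof -
  have v: "vdot d (Zs t) (\<lambda>l. u * inv_transpose_apply d A y l) = u * phase d (Mt t) y" for t y
    unfolding vdot_ita phase_def Mt_def ..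
  show ?thesis
    unfolding epstein_expand v infsum_cmult_right'[symmetric] by (simp only: mult_ac)
qed

lemma g_meas:
  assumes d: "d = Suc m"
  shows "(\<lambda>v. complex_of_real (u ^ (d - 1)) * E1 (u * phase d M ((cyc_perm d ^^ j) (pyr_vec d p v))))
     \<in> borel_measurable (PiM {..<d - 1} (\<lambda>_. lborel))"
proof -
  have dm: "d - 1 = m" using d by simp
  show ?thesis unfolding dm E1_explicit[OF d] by measurable
qed

lemma V_finite: "emeasure (PiM {..<(k::nat)} (\<lambda>_. lborel)) (PiE {..<k} (\<lambda>_. {0..1/2::real})) < \<infinity>"
proof -
  have "emeasure (PiM {..<k} (\<lambda>_. lborel)) (PiE {..<k} (\<lambda>_. {0..1/2::real})) = (\<Prod>i<k. emeasure lborel {0..1/2::real})"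
    by (rule product_sigma_finite.emeasure_PiM[OF product_sigma_finite_lborel]) auto
  also have "\<dots> < \<infinity>"
  proof -
    have "(\<Prod>i<k. emeasure lborel {0..1/2::real}) \<noteq> \<infinity>"
      unfolding infinity_ennreal_def ennreal_prod_eq_top using emeasure_half_finite by (auto simp del: emeasure_lborel_Icc)
    then show ?thesis by (simp only: less_top infinity_ennreal_def)
  qed
  finally show ?thesis .
qed

lemma v_exchange:
  assumes d: "d = Suc m"
  shows "(LINT v:(PiE {..<d - 1} (\<lambda>_. {0..1/2::real}))|(PiM {..<d - 1} (\<lambda>_. lborel)).
          complex_of_real (u ^ (d - 1)) *
          (\<Prod>i=1..n. epstein_zeta d A (\<nu> i)
             (\<lambda>l. u * inv_transpose_apply d A ((cyc_perm d ^^ j) (pyr_vec d p v)) l)))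
     = (\<Sum>\<^sub>\<infinity>t\<in>T. a t * innerI d (Mt t) j p u)"
  unfolding innerI_def
proof (rule conjunct2[OF set_integral_infsum_exchange[OF countable_T a_summable]])
  show "PiE {..<d - 1} (\<lambda>_. {0..1/2::real}) \<in> sets (PiM {..<d - 1} (\<lambda>_. lborel))"
    by (rule sets_PiM_I_finite) auto
  show "emeasure (PiM {..<d - 1} (\<lambda>_. lborel)) (PiE {..<d - 1} (\<lambda>_. {0..1/2::real})) < \<infinity>"
    by (rule V_finite)
  show "(\<lambda>v. complex_of_real (u ^ (d - 1)) * E1 (u * phase d (Mt t) ((cyc_perm d ^^ j) (pyr_vec d p v))))
     \<in> borel_measurable (PiM {..<d - 1} (\<lambda>_. lborel))" for t
    by (rule g_meas[OF d])
  show "norm (complex_of_real (u ^ (d - 1)) * E1 (u * phase d (Mt t) ((cyc_perm d ^^ j) (pyr_vec d p v)))) \<le> \<bar>u\<bar> ^ (d - 1)" for t v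
    by (simp add: norm_mult norm_power)
  show "0 \<le> \<bar>u\<bar> ^ (d - 1)" by simp
  show "complex_of_real (u ^ (d - 1)) *
          (\<Prod>i=1..n. epstein_zeta d A (\<nu> i)
             (\<lambda>l. u * inv_transpose_apply d A ((cyc_perm d ^^ j) (pyr_vec d p v)) l)) =
     (\<Sum>\<^sub>\<infinity>t\<in>T. a t * (complex_of_real (u ^ (d - 1)) * E1 (u * phase d (Mt t) ((cyc_perm d ^^ j) (pyr_vec d p v)))))" for v
    by (rule integrand_expand)
qed

lemma u_exchange:
  assumes d: "d = Suc m"
  shows "(LINT u:{0..1/2}|lborel.
        (LINT v:(PiE {..<d - 1} (\<lambda>_. {0..1/2::real}))|(PiM {..<d - 1} (\<lambda>_. lborel)).
          complex_of_real (u ^ (d - 1)) *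
          (\<Prod>i=1..n. epstein_zeta d A (\<nu> i)
             (\<lambda>l. u * inv_transpose_apply d A ((cyc_perm d ^^ j) (pyr_vec d p v)) l))))
     = (\<Sum>\<^sub>\<infinity>t\<in>T. a t * (LINT u:{0..1/2}|lborel. innerI d (Mt t) j p u))"
  unfolding v_exchange[OF d]
proof (rule conjunct2[OF set_integral_infsum_exchange[OF countable_T a_summable]])
  show "{0..1/2::real} \<in> sets lborel" by simp
  show "emeasure lborel {0..1/2::real} < \<infinity>" by (rule emeasure_half_finite)
  show "innerI d (Mt t) j p \<in> borel_measurable lborel" for t by (rule inner_meas[OF d])
  show "norm (innerI d (Mt t) j p u) \<le> 1" if "u \<in> {0..1/2}" for t u by (rule inner_bound[OF d that])
qed simp_all

end


context nb
begin

lemma aX_summable: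
  assumes "\<And>t. t \<in> T \<Longrightarrow> norm (X t) \<le> C"
  shows "(\<lambda>t. a t * X t) summable_on T"
proof -
  have "(\<lambda>t. norm (a t) * C) summable_on T" using a_summable by (rule summable_on_cmult_left)
  then have "(\<lambda>t. norm (a t * X t)) summable_on T"
    by (rule Infinite_Sum.abs_summable_on_comparison_test')
       (use assms in \<open>auto simp: norm_mult intro!: mult_left_mono\<close>)
  then show ?thesis by (rule abs_summable_summable)
qed

lemma norm_int_inner:
  assumes d: "d = Suc m"
  shows "norm (LINT u:{0..1/2}|lborel. innerI d M j p u) \<le> 1"
proof -
  have "norm (LINT u:{0..1/2}|lborel. innerI d M j p u) \<le> 1 * measure lborel {0..1/2::real}"
    by (rule norm_set_integral_le[OF _ emeasure_half_finite])
       (auto simp: inner_integrable[OF d] inner_bound[OF d])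
  then show ?thesis by simp
qed

lemma Tp_bound:
  assumes d: "d = Suc m"
  shows "norm (Tp d M) \<le> 2 ^ d * (\<Sum>p\<in>PiE {..<d - 1} (\<lambda>_. {-1, 1::real}). \<Sum>j<d. 1)"
proof -
  have "norm (Tp d M) = 2 ^ d * norm (\<Sum>p\<in>PiE {..<d - 1} (\<lambda>_. {-1, 1::real}). \<Sum>j<d. LINT u:{0..1/2}|lborel. innerI d M j p u)"
    unfolding Tp_def by (simp add: norm_mult norm_power)
  also have "\<dots> \<le> 2 ^ d * (\<Sum>p\<in>PiE {..<d - 1} (\<lambda>_. {-1, 1::real}). \<Sum>j<d. norm (LINT u:{0..1/2}|lborel. innerI d M j p u))"
    by (intro mult_left_mono order_trans[OF norm_sum] sum_mono norm_sum) auto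
  also have "\<dots> \<le> 2 ^ d * (\<Sum>p\<in>PiE {..<d - 1} (\<lambda>_. {-1, 1::real}). \<Sum>j<d. 1)"
    by (intro mult_left_mono sum_mono norm_int_inner[OF d]) auto
  finally show ?thesis .
qed

lemma rhs_eq:
  assumes d: "d = Suc m"
  shows "2 ^ d * (\<Sum>p\<in>PiE {..<d - 1} (\<lambda>_. {-1, 1::real}). \<Sum>j<d.
      (LINT u:{0..1/2}|lborel.
        (LINT v:(PiE {..<d - 1} (\<lambda>_. {0..1/2::real}))|(PiM {..<d - 1} (\<lambda>_. lborel)).
          complex_of_real (u ^ (d - 1)) *
          (\<Prod>i=1..n. epstein_zeta d A (\<nu> i)
             (\<lambda>l. u * inv_transpose_apply d A ((cyc_perm d ^^ j) (pyr_vec d p v)) l)))))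
   = (\<Sum>\<^sub>\<infinity>t\<in>T. a t * Tp d (Mt t))"
proof -
  let ?P = "PiE {..<d - 1} (\<lambda>_. {-1, 1::real})"
  define I where "I t p j = (LINT u:{0..1/2}|lborel. innerI d (Mt t) j p u)" for t p j
  have sI: "(\<lambda>t. a t * I t p j) summable_on T" for p j
    by (rule aX_summable[where C=1]) (auto simp: I_def norm_int_inner[OF d])
  have sJ: "(\<lambda>t. \<Sum>j<d. a t * I t p j) summable_on T" for p
    using infsum_finite_sum[of "{..<d}" "\<lambda>j t. a t * I t p j" T] sI by auto
  have "2 ^ d * (\<Sum>p\<in>?P. \<Sum>j<d.
      (LINT u:{0..1/2}|lborel.
        (LINT v:(PiE {..<d - 1} (\<lambda>_. {0..1/2::real}))|(PiM {..<d - 1} (\<lambda>_. lborel)).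
          complex_of_real (u ^ (d - 1)) *
          (\<Prod>i=1..n. epstein_zeta d A (\<nu> i)
             (\<lambda>l. u * inv_transpose_apply d A ((cyc_perm d ^^ j) (pyr_vec d p v)) l)))))
    = 2 ^ d * (\<Sum>p\<in>?P. \<Sum>j<d. (\<Sum>\<^sub>\<infinity>t\<in>T. a t * I t p j))"
    unfolding u_exchange[OF d] I_def ..
  also have "\<dots> = 2 ^ d * (\<Sum>p\<in>?P. (\<Sum>\<^sub>\<infinity>t\<in>T. \<Sum>j<d. a t * I t p j))"
    using infsum_finite_sum[of "{..<d}" "\<lambda>j t. a t * I t _ j" T] sI by simp
  also have "\<dots> = 2 ^ d * (\<Sum>\<^sub>\<infinity>t\<in>T. \<Sum>p\<in>?P. \<Sum>j<d. a t * I t p j)"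
    using infsum_finite_sum[of ?P "\<lambda>p t. \<Sum>j<d. a t * I t p j" T] sJ by (simp add: finite_PiE)
  also have "\<dots> = (\<Sum>\<^sub>\<infinity>t\<in>T. 2 ^ d * (\<Sum>p\<in>?P. \<Sum>j<d. a t * I t p j))"
    by (rule infsum_cmult_right'[symmetric])
  also have "\<dots> = (\<Sum>\<^sub>\<infinity>t\<in>T. a t * Tp d (Mt t))"
    unfolding Tp_def I_def by (intro infsum_cong) (simp add: sum_distrib_left mult_ac)
  finally show ?thesis .
qed

definition T0 where "T0 = {t \<in> T. Zs t = (\<lambda>_. 0)}"

lemma Zs_lattice: "t \<in> T \<Longrightarrow> Zs t \<in> Defs.lattice d A"
  unfolding Zs_def by (rule lattice_sum) (auto simp: T_def Lp_def PiE_iff)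

lemma vnorm_neg: "vnorm d (\<lambda>l. - z l) = vnorm d z"
  by (simp add: vnorm_def)

lemma pair_eq:
  assumes d: "d = Suc m"
  shows "(\<Sum>\<^sub>\<infinity>t\<in>T. a t * Tp d (Mt t)) = (\<Sum>\<^sub>\<infinity>t\<in>T0. a t)"
proof -
  define neg where "neg t = restrict (\<lambda>i l. - t i l) {1..n}" for t :: "nat \<Rightarrow> nat \<Rightarrow> real"
  have negT: "neg t \<in> T" if "t \<in> T" for t
  proof -
    have "(\<lambda>l. - t i l) \<in> Lp" if i: "i \<in> {1..n}" for i
    proof -
      have ti: "t i \<in> Lp" using \<open>t \<in> T\<close> i by (auto simp: T_def)
      then have "(\<lambda>l. - t i l) \<in> Defs.lattice d A" by (auto simp: Lp_def intro: lattice_neg)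
      moreover have "(\<lambda>l. - t i l) \<noteq> (\<lambda>_. 0)"
      proof
        assume "(\<lambda>l. - t i l) = (\<lambda>_. 0)"
        then have "t i = (\<lambda>_. 0)" by (auto simp: fun_eq_iff dest: fun_cong)
        then show False using ti by (simp add: Lp_def)
      qed
      ultimately show ?thesis by (simp add: Lp_def)
    qed
    then show ?thesis unfolding neg_def T_def by (simp add: restrict_PiE_iff)
  qed
  have negneg: "neg (neg t) = t" if "t \<in> T" for t
  proof
    fix i show "neg (neg t) i = t i"
    proof (cases "i \<in> {1..n}")
      case True then show ?thesis by (simp add: neg_def)
    next
      case False
      then have "t i = undefined" using that unfolding T_def by (rule PiE_arb[rotated])
      then show ?thesis using False by (simp add: neg_def)
    qed
  qed
  have bij: "bij_betw neg T T"
  proof -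
    have f: "neg \<in> T \<rightarrow> T" by (rule funcsetI) (rule negT)
    show ?thesis
    proof (rule bij_betw_byWitness[where f'=neg])
      show "\<forall>a\<in>T. neg (neg a) = a" using negneg by blast
      show "\<forall>a\<in>T. neg (neg a) = a" using negneg by blast
      show "neg ` T \<subseteq> T" using negT by blast
      show "neg ` T \<subseteq> T" using negT by blast
    qed

  qed
  have a_neg: "a (neg t) = a t" for t
  proof -
    have "vnorm d (neg t i) = vnorm d (t i)" if "i \<in> {1..n}" for i
      using that by (simp add: neg_def vnorm_neg)
    then show ?thesis unfolding a_def by (intro prod.cong refl) simp
  qed
  have Zs_neg: "Zs (neg t) = (\<lambda>l. - Zs t l)" for t
  proof
    fix l
    have "(\<Sum>i\<in>{1..n}. neg t i l) = (\<Sum>i\<in>{1..n}. - t i l)"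
      by (intro sum.cong refl) (simp add: neg_def)
    then show "Zs (neg t) l = - Zs t l" unfolding Zs_def by (simp add: sum_negf)
  qed
  have Mt_neg: "Mt (neg t) = (\<lambda>k. - Mt t k)" for t
    unfolding Mt_def Zs_neg by (rule ext) (rule coeffs_neg)
  define C where "C = 2 ^ d * (\<Sum>p\<in>PiE {..<d - 1} (\<lambda>_. {-1, 1::real}). \<Sum>j<d. (1::real))"
  have s1: "(\<lambda>t. a t * Tp d (Mt t)) summable_on T"
    by (rule aX_summable[where C=C]) (unfold C_def, rule Tp_bound[OF d])
  have s2: "(\<lambda>t. a t * Tp d (\<lambda>k. - Mt t k)) summable_on T"
    by (rule aX_summable[where C=C]) (unfold C_def, rule Tp_bound[OF d])
  have S_eq: "(\<Sum>\<^sub>\<infinity>t\<in>T. a t * Tp d (Mt t)) = (\<Sum>\<^sub>\<infinity>t\<in>T. a t * Tp d (\<lambda>k. - Mt t k))"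
  proof -
    have "(\<Sum>\<^sub>\<infinity>t\<in>T. a t * Tp d (Mt t)) = (\<Sum>\<^sub>\<infinity>t\<in>T. a (neg t) * Tp d (Mt (neg t)))"
      by (rule infsum_reindex_bij_betw[OF bij, symmetric])
    also have "\<dots> = (\<Sum>\<^sub>\<infinity>t\<in>T. a t * Tp d (\<lambda>k. - Mt t k))"
      by (simp add: a_neg Mt_neg)
    finally show ?thesis .
  qed
  have "2 * (\<Sum>\<^sub>\<infinity>t\<in>T. a t * Tp d (Mt t)) =
      (\<Sum>\<^sub>\<infinity>t\<in>T. a t * Tp d (Mt t)) + (\<Sum>\<^sub>\<infinity>t\<in>T. a t * Tp d (\<lambda>k. - Mt t k))"
    using S_eq by simp
  also have "\<dots> = (\<Sum>\<^sub>\<infinity>t\<in>T. a t * (Tp d (Mt t) + Tp d (\<lambda>k. - Mt t k)))"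
    by (subst infsum_add[OF s1 s2, symmetric]) (simp add: distrib_left)
  also have "\<dots> = (\<Sum>\<^sub>\<infinity>t\<in>T. 2 * (if t \<in> T0 then a t else 0))"
  proof (rule infsum_cong)
    fix t assume t: "t \<in> T"
    have L: "Zs t \<in> Defs.lattice d A" by (rule Zs_lattice[OF t])
    have "\<forall>k<d. Mt t k \<in> \<int>" unfolding Mt_def using lattice_coeffs_int[OF L] by blast
    then have "Tp d (Mt t) + Tp d (\<lambda>k. - Mt t k) = (if \<forall>k<d. Mt t k = 0 then 2 else 0)"
      by (rule Tp_pair[OF d])
    moreover have "(\<forall>k<d. Mt t k = 0) \<longleftrightarrow> t \<in> T0"
      unfolding Mt_def T0_def using lattice_eq_zero_iff[OF L] t by auto
    ultimately show "a t * (Tp d (Mt t) + Tp d (\<lambda>k. - Mt t k)) = 2 * (if t \<in> T0 then a t else 0)"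
      by simp
  qed
  also have "\<dots> = 2 * (\<Sum>\<^sub>\<infinity>t\<in>T. (if t \<in> T0 then a t else 0))"
    by (rule infsum_cmult_right')
  also have "(\<Sum>\<^sub>\<infinity>t\<in>T. (if t \<in> T0 then a t else 0)) = (\<Sum>\<^sub>\<infinity>t\<in>T0. a t)"
    by (rule infsum_cong_neutral) (auto simp: T0_def)
  finally show ?thesis by simp
qed

end


context nb
begin

definition X where "X = {x \<in> PiE {1..<n} (\<lambda>_. Defs.lattice d A).
            \<forall>j\<in>{1..n}. nbody_point n x j \<noteq> nbody_point n x (j - 1)}"

definition delta_map where "delta_map x = restrict (\<lambda>j l. nbody_point n x j l - nbody_point n x (j - 1) l) {1..n}"
definition gamma_map where "gamma_map t = restrict (\<lambda>j l. \<Sum>i\<in>{1..j}. t i l) {1..<n}"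

lemma np_lattice: "x \<in> PiE {1..<n} (\<lambda>_. Defs.lattice d A) \<Longrightarrow> nbody_point n x j \<in> Defs.lattice d A"
  unfolding nbody_point_def using lattice_zero by (auto simp: PiE_iff)

lemma np_0: "nbody_point n x 0 = (\<lambda>_. 0)" by (simp add: nbody_point_def)
lemma np_n: "nbody_point n x n = (\<lambda>_. 0)" by (simp add: nbody_point_def)

lemma del_T0: "x \<in> X \<Longrightarrow> delta_map x \<in> T0"
proof -
  assume x: "x \<in> X"
  then have xP: "x \<in> PiE {1..<n} (\<lambda>_. Defs.lattice d A)" and ne: "\<forall>j\<in>{1..n}. nbody_point n x j \<noteq> nbody_point n x (j - 1)"
    by (auto simp: X_def)
  have "(\<lambda>l. nbody_point n x j l - nbody_point n x (j - 1) l) \<in> Lp" if j: "j \<in> {1..n}" for j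
  proof -
    have "(\<lambda>l. nbody_point n x j l - nbody_point n x (j - 1) l) \<in> Defs.lattice d A"
      by (intro lattice_diff np_lattice xP)
    moreover have "(\<lambda>l. nbody_point n x j l - nbody_point n x (j - 1) l) \<noteq> (\<lambda>_. 0)"
    proof
      assume "(\<lambda>l. nbody_point n x j l - nbody_point n x (j - 1) l) = (\<lambda>_. 0)"
      then have "nbody_point n x j = nbody_point n x (j - 1)"
        by (intro ext) (drule fun_cong, simp)
      then show False using ne j by blast
    qed
    ultimately show ?thesis by (simp add: Lp_def)
  qed
  then have "delta_map x \<in> T" unfolding delta_map_def T_def by (simp add: restrict_PiE_iff)
  moreover have "Zs (delta_map x) = (\<lambda>_. 0)"
  proof
    fix l
    have "Zs (delta_map x) l = (\<Sum>i\<in>{1..n}. nbody_point n x i l - nbody_point n x (i - 1) l)"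
      unfolding Zs_def delta_map_def by (intro sum.cong refl) simp
    also have "\<dots> = nbody_point n x n l - nbody_point n x 0 l"
      by (rule telescope_real[of "\<lambda>i. nbody_point n x i l"])
    also have "\<dots> = 0" by (simp add: np_0 np_n)
    finally show "Zs (delta_map x) l = 0" .
  qed
  ultimately show ?thesis by (simp add: T0_def)
qed

lemma np_gam: "t \<in> T0 \<Longrightarrow> j \<le> n \<Longrightarrow> nbody_point n (gamma_map t) j = (\<lambda>l. \<Sum>i\<in>{1..j}. t i l)"
proof -
  assume t: "t \<in> T0" and j: "j \<le> n"
  show ?thesis
  proof (cases "1 \<le> j \<and> j < n")
    case True then show ?thesis by (simp add: nbody_point_def gamma_map_def)
  next
    case False
    then consider "j = 0" | "j = n" using j by linarith
    then show ?thesis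
    proof cases
      case 1 then show ?thesis by (simp add: nbody_point_def)
    next
      case 2
      have "Zs t = (\<lambda>_. 0)" using t by (simp add: T0_def)
      then have "(\<lambda>l. \<Sum>i\<in>{1..n}. t i l) = (\<lambda>_. 0)" by (simp add: Zs_def)
      then show ?thesis using 2 by (simp add: nbody_point_def)
    qed
  qed
qed

lemma diff_sum: "(j::nat) \<ge> 1 \<Longrightarrow> (\<Sum>i\<in>{1..j}. f i) - (\<Sum>i\<in>{1..j - 1}. f i) = (f j :: real)"
proof -
  assume "j \<ge> 1"
  then obtain k where k: "j = Suc k" by (cases j) auto
  show ?thesis unfolding k by (simp add: sum.cl_ivl_Suc)
qed

lemma gam_X: "t \<in> T0 \<Longrightarrow> gamma_map t \<in> X"
proof -
  assume t: "t \<in> T0"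
  then have tT: "t \<in> T" by (simp add: T0_def)
  have tL: "t i \<in> Defs.lattice d A" "t i \<noteq> (\<lambda>_. 0)" if "i \<in> {1..n}" for i
    using tT that by (auto simp: T_def Lp_def)
  have "(\<lambda>l. \<Sum>i\<in>{1..j}. t i l) \<in> Defs.lattice d A" if "j \<in> {1..<n}" for j
    using that by (intro lattice_sum tL) auto
  then have P: "gamma_map t \<in> PiE {1..<n} (\<lambda>_. Defs.lattice d A)" unfolding gamma_map_def by (simp add: restrict_PiE_iff)
  have "nbody_point n (gamma_map t) j \<noteq> nbody_point n (gamma_map t) (j - 1)" if j: "j \<in> {1..n}" for j
  proof
    assume eq: "nbody_point n (gamma_map t) j = nbody_point n (gamma_map t) (j - 1)"
    have "t j = (\<lambda>_. 0)"
    proof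
      fix l
      have "t j l = (\<Sum>i\<in>{1..j}. t i l) - (\<Sum>i\<in>{1..j - 1}. t i l)"
        using j diff_sum[of j "\<lambda>i. t i l"] by simp
      also have "\<dots> = nbody_point n (gamma_map t) j l - nbody_point n (gamma_map t) (j - 1) l"
      proof -
        have g1: "nbody_point n (gamma_map t) j = (\<lambda>l. \<Sum>k\<in>{1..j}. t k l)" using t j by (intro np_gam) auto
        have g2: "nbody_point n (gamma_map t) (j - 1) = (\<lambda>l. \<Sum>k\<in>{1..j - 1}. t k l)" using t j by (intro np_gam) auto
        show ?thesis unfolding g1 g2 ..
      qed
      also have "\<dots> = 0" using eq by simp
      finally show "t j l = 0" .
    qed
    then show False using tL(2)[OF j] by simp
  qed
  then show ?thesis using P by (simp add: X_def)
qed

lemma gam_del: "x \<in> X \<Longrightarrow> gamma_map (delta_map x) = x"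
proof
  fix j assume x: "x \<in> X"
  then have xP: "x \<in> PiE {1..<n} (\<lambda>_. Defs.lattice d A)" by (simp add: X_def)
  show "gamma_map (delta_map x) j = x j"
  proof (cases "j \<in> {1..<n}")
    case True
    have "gamma_map (delta_map x) j = (\<lambda>l. \<Sum>i\<in>{1..j}. delta_map x i l)" using True by (simp add: gamma_map_def)
    also have "\<dots> = (\<lambda>l. \<Sum>i\<in>{1..j}. nbody_point n x i l - nbody_point n x (i - 1) l)"
      using True by (intro ext sum.cong refl) (simp add: delta_map_def)
    also have "\<dots> = (\<lambda>l. nbody_point n x j l - nbody_point n x 0 l)"
      by (intro ext telescope_real)
    also have "\<dots> = x j" using True by (simp add: nbody_point_def)
    finally show ?thesis .
  next
    case False
    then have "x j = undefined" using xP by (rule PiE_arb[rotated])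
    then show ?thesis using False by (auto simp: gamma_map_def)
  qed
qed

lemma del_gam: "t \<in> T0 \<Longrightarrow> delta_map (gamma_map t) = t"
proof
  fix i assume t: "t \<in> T0"
  show "delta_map (gamma_map t) i = t i"
  proof (cases "i \<in> {1..n}")
    case True
    have g1: "nbody_point n (gamma_map t) i = (\<lambda>l. \<Sum>k\<in>{1..i}. t k l)" using t True by (intro np_gam) auto
    have g2: "nbody_point n (gamma_map t) (i - 1) = (\<lambda>l. \<Sum>k\<in>{1..i - 1}. t k l)" using t True by (intro np_gam) auto
    have "delta_map (gamma_map t) i = (\<lambda>l. (\<Sum>k\<in>{1..i}. t k l) - (\<Sum>k\<in>{1..i - 1}. t k l))"
      using True by (simp only: delta_map_def restrict_apply' g1 g2)
    also have "\<dots> = t i"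
    proof
      fix l show "(\<Sum>k\<in>{1..i}. t k l) - (\<Sum>k\<in>{1..i - 1}. t k l) = t i l"
        using True diff_sum[of i "\<lambda>k. t k l"] by simp
    qed
    finally show ?thesis .
  next
    case False
    have "t \<in> T" using t by (simp add: T0_def)
    then have "t i = undefined" using False unfolding T_def by (rule PiE_arb)
    then show ?thesis using False by (auto simp: delta_map_def)
  qed
qed

lemma nbody_eq: "nbody_zeta d A n \<nu> = (\<Sum>\<^sub>\<infinity>t\<in>T0. a t)"
proof -
  have bij: "bij_betw delta_map X T0"
  proof (rule bij_betw_byWitness[where f'=gamma_map])
    show "\<forall>x\<in>X. gamma_map (delta_map x) = x" using gam_del by blast
    show "\<forall>t\<in>T0. delta_map (gamma_map t) = t" using del_gam by blast
    show "delta_map ` X \<subseteq> T0" using del_T0 by blast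
    show "gamma_map ` T0 \<subseteq> X" using gam_X by blast
  qed
  have f: "(\<Prod>j=1..n. (of_real (vnorm d (\<lambda>i. nbody_point n x j i - nbody_point n x (j - 1) i)) :: complex) powr (- \<nu> j)) = a (delta_map x)" for x
    unfolding a_def delta_map_def by (intro prod.cong refl) simp
  have "nbody_zeta d A n \<nu> = (\<Sum>\<^sub>\<infinity>x\<in>X. a (delta_map x))"
    unfolding nbody_zeta_def X_def[symmetric] f ..
  also have "\<dots> = (\<Sum>\<^sub>\<infinity>t\<in>T0. a t)" by (rule infsum_reindex_bij_betw[OF bij])
  finally show ?thesis .
qed

end

theorem corollary2:
  fixes d n :: nat and A :: "nat \<Rightarrow> nat \<Rightarrow> real" and \<nu> :: "nat \<Rightarrow> complex"
  assumes "d \<ge> 1" and "n \<ge> 1"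
    and "mat_det d A \<noteq> 0"
    and "\<forall>i\<in>{1..n}. Re (\<nu> i) > real d"
  shows "nbody_zeta d A n \<nu> =
    2 ^ d * (\<Sum>p\<in>PiE {..<d - 1} (\<lambda>_. {-1, 1::real}). \<Sum>j<d.
      (LINT u:{0..1/2}|lborel.
        (LINT v:(PiE {..<d - 1} (\<lambda>_. {0..1/2::real}))|(PiM {..<d - 1} (\<lambda>_. lborel)).
          complex_of_real (u ^ (d - 1)) *
          (\<Prod>i=1..n. epstein_zeta d A (\<nu> i)
             (\<lambda>l. u * inv_transpose_apply d A ((cyc_perm d ^^ j) (pyr_vec d p v)) l)))))"
proof -
  obtain B where BA: "\<And>i j. i<d \<Longrightarrow> j<d \<Longrightarrow> (\<Sum>k<d. B i k * A k j) = (if i=j then 1 else 0)"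
    and AB: "\<And>i j. i<d \<Longrightarrow> j<d \<Longrightarrow> (\<Sum>k<d. A i k * B k j) = (if i=j then 1 else 0)"
    using inverse_exists[OF assms(3)] by blast
  interpret nb d A B n \<nu>
    by unfold_locales (use assms BA AB in auto)
  obtain m where d: "d = Suc m" using assms(1) by (cases d) auto
  show ?thesis by (simp only: rhs_eq[OF d] pair_eq[OF d] nbody_eq)
qed

end
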